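(* In the setting of the context, let $p_j:=\|v_j\|^2/\operatorname{tr}(\Sigma)$ for $j\in\mathbb N$ (leverage-score distribution), assume $\mathcal W\subseteq\mathcal S$, and assume that $R'<\infty$ for this $p$. Then there is a constant $c>0$ depending only on the bounds $A,B,C,D$ (e.g. $c=\frac83\big(\frac{BD}{AC}\big)^2$) such that for every $f\in\mathcal H$, $n\in\mathbb N$, $\delta\in(0,1)$: if $m\ge c\,n\log(2n/\delta)$, then with probability at least $1-\delta$ the matrix $\widehat\Sigma_\Omega$ is invertible, the weighted least-squares problem $\operatorname{argmin}_{x\in\mathbb C^n}\sum_{t=1}^mp_{i_t}^{-1}|\langle W\iota_nx,s_{i_t}\rangle-\langle f,s_{i_t}\rangle|^2$ has a unique solution $\tilde x$, and $\tilde f:=W\iota_n\tilde x$ satisfies $\|f-\tilde f\|\le\|P_{\mathcal W_n^\perp}f\|(1+K_{n,\Omega}^2)^{1/2}$ with $K_{n,\Omega}:=\|W\iota_n\widehat\Sigma_\Omega^{-1}\widehat\Gamma_\Omega\|$.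
   Context: Let $\mathcal H$ be a separable complex Hilbert space, $\ell^2=\ell^2(\mathbb N)$ with canonical basis $(e_j)$; $a\otimes b$ denotes $x\mapsto\langle x,b\rangle a$; $\iota_n:\mathbb C^n\to\ell^2$, $\iota_n(x_1,\dots,x_n)=(x_1,\dots,x_n,0,\dots)$. $(s_k)_{k\in\mathbb N}$ is a frame for its closed span $\mathcal S$ with bounds $0<A\le B$ ($A\|h\|^2\le\sum_k|\langle h,s_k\rangle|^2\le B\|h\|^2$, $h\in\mathcal S$); $(w_k)_{k\in\mathbb N}$ is a Riesz basis for its closed span $\mathcal W$ with bounds $0<C\le D$ ($C\|x\|^2\le\|\sum_kx_kw_k\|^2\le D\|x\|^2$, $x\in\ell^2$). Synthesis operators $Sx=\sum_kx_ks_k$, $Wx=\sum_kx_kw_k$; $U:=S^*W$. $\mathcal W_n:=\operatorname{span}\{w_1,\dots,w_n\}$, $P_{\mathcal W_n^\perp}$ orthogonal projection onto $\mathcal W_n^\perp$. $\Sigma:=\iota_n^*U^*U\iota_n$, $v_j:=\iota_n^*U^*e_j$, $u_j:=P_{\mathcal W_n^\perp}s_j$, $R':=\sup_{j:p_j>0}\|u_j\|^2/p_j$. $i_1,\dots,i_m$ i.i.d. with law $p$, $Q_\Omega:=\frac1m\sum_t\frac{e_{i_t}\otimes e_{i_t}}{p_{i_t}}$, $\widehat\Sigma_\Omega:=\iota_n^*U^*Q_\Omega U\iota_n$, $\widehat\Gamma_\Omega:=\iota_n^*U^*Q_\Omega S^*P_{\mathcal W_n^\perp}$. *)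

theory Defs
  imports "HOL-Probability.Probability" "Jordan_Normal_Form.Matrix"
begin

section \<open>The Hilbert space H, modelled as l2(N) of complex sequences\<close>

type_synonym seq = "nat \<Rightarrow> complex"

definition l2 :: "seq set" where
  "l2 = {x. summable (\<lambda>j. (cmod (x j))\<^sup>2)}"

definition l2_inner :: "seq \<Rightarrow> seq \<Rightarrow> complex" where
  "l2_inner x y = (\<Sum>j. x j * cnj (y j))"

definition l2_norm :: "seq \<Rightarrow> real" where
  "l2_norm x = sqrt (\<Sum>j. (cmod (x j))\<^sup>2)"

definition l2_sums :: "(nat \<Rightarrow> seq) \<Rightarrow> seq \<Rightarrow> bool" where
  "l2_sums g h \<longleftrightarrow> (\<lambda>N. l2_norm (\<lambda>j. h j - (\<Sum>k<N. g k j))) \<longlonglongrightarrow> 0"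

definition lin_span :: "(nat \<Rightarrow> seq) \<Rightarrow> nat set \<Rightarrow> seq set" where
  "lin_span s I = {(\<lambda>j. \<Sum>k\<in>F. c k * s k j) | F c. finite F \<and> F \<subseteq> I}"

definition l2_closure :: "seq set \<Rightarrow> seq set" where
  "l2_closure V = {h \<in> l2. \<forall>e>0. \<exists>v\<in>V. l2_norm (\<lambda>j. h j - v j) < e}"

definition closed_span :: "(nat \<Rightarrow> seq) \<Rightarrow> seq set" where
  "closed_span s = l2_closure (lin_span s UNIV)"

definition orth_compl :: "seq set \<Rightarrow> seq set" where
  "orth_compl V = {u \<in> l2. \<forall>v\<in>V. l2_inner u v = 0}"

definition orth_proj :: "seq set \<Rightarrow> seq \<Rightarrow> seq" where
  "orth_proj V h = (THE p. p \<in> V \<and> (\<forall>v\<in>V. l2_inner (\<lambda>j. h j - p j) v = 0))"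

definition l2_opnorm :: "(seq \<Rightarrow> seq) \<Rightarrow> real" where
  "l2_opnorm T = Sup {l2_norm (T h) | h. h \<in> l2 \<and> l2_norm h \<le> 1}"

definition is_frame :: "(nat \<Rightarrow> seq) \<Rightarrow> real \<Rightarrow> real \<Rightarrow> bool" where
  "is_frame s A B \<longleftrightarrow> 0 < A \<and> A \<le> B \<and> (\<forall>k. s k \<in> l2) \<and>
     (\<forall>h \<in> closed_span s. summable (\<lambda>k. (cmod (l2_inner h (s k)))\<^sup>2) \<and>
        A * (l2_norm h)\<^sup>2 \<le> (\<Sum>k. (cmod (l2_inner h (s k)))\<^sup>2) \<and>
        (\<Sum>k. (cmod (l2_inner h (s k)))\<^sup>2) \<le> B * (l2_norm h)\<^sup>2)"

definition is_riesz_basis :: "(nat \<Rightarrow> seq) \<Rightarrow> real \<Rightarrow> real \<Rightarrow> bool" where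
  "is_riesz_basis w C D \<longleftrightarrow> 0 < C \<and> C \<le> D \<and> (\<forall>k. w k \<in> l2) \<and>
     (\<forall>x \<in> l2. \<exists>h \<in> l2. l2_sums (\<lambda>k j. x k * w k j) h \<and>
        C * (l2_norm x)\<^sup>2 \<le> (l2_norm h)\<^sup>2 \<and> (l2_norm h)\<^sup>2 \<le> D * (l2_norm x)\<^sup>2)"

definition analysis_op :: "(nat \<Rightarrow> seq) \<Rightarrow> seq \<Rightarrow> seq" where
  "analysis_op s h = (\<lambda>j. l2_inner h (s j))"

definition W_iota :: "(nat \<Rightarrow> seq) \<Rightarrow> nat \<Rightarrow> complex vec \<Rightarrow> seq" where
  "W_iota w n x = (\<lambda>j. \<Sum>k<n. x $ k * w k j)"

definition U_iota :: "(nat \<Rightarrow> seq) \<Rightarrow> (nat \<Rightarrow> seq) \<Rightarrow> nat \<Rightarrow> complex vec \<Rightarrow> seq" where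
  "U_iota s w n x = analysis_op s (W_iota w n x)"

text \<open>iota_n^* U^* : l2 to C^n, using (U^* y)_k = <y, U e_k> = sum_j y_j <s_j, w_k>.\<close>
definition iota_U_adj :: "(nat \<Rightarrow> seq) \<Rightarrow> (nat \<Rightarrow> seq) \<Rightarrow> nat \<Rightarrow> seq \<Rightarrow> complex vec" where
  "iota_U_adj s w n y = vec n (\<lambda>k. \<Sum>j. y j * l2_inner (s j) (w k))"

definition e_seq :: "nat \<Rightarrow> seq" where
  "e_seq i = (\<lambda>j. if j = i then 1 else 0)"

definition cvec_norm :: "complex vec \<Rightarrow> real" where
  "cvec_norm x = sqrt (\<Sum>k<dim_vec x. (cmod (x $ k))\<^sup>2)"

definition mat_trace :: "complex mat \<Rightarrow> complex" where
  "mat_trace M = (\<Sum>i<dim_row M. M $$ (i, i))"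

definition mat_inv :: "complex mat \<Rightarrow> complex mat" where
  "mat_inv M = (SOME N. inverts_mat M N \<and> inverts_mat N M)"

definition Sigma_mat :: "(nat \<Rightarrow> seq) \<Rightarrow> (nat \<Rightarrow> seq) \<Rightarrow> nat \<Rightarrow> complex mat" where
  "Sigma_mat s w n = mat n n (\<lambda>(k, l). iota_U_adj s w n (U_iota s w n (unit_vec n l)) $ k)"

definition v_vec :: "(nat \<Rightarrow> seq) \<Rightarrow> (nat \<Rightarrow> seq) \<Rightarrow> nat \<Rightarrow> nat \<Rightarrow> complex vec" where
  "v_vec s w n j = iota_U_adj s w n (e_seq j)"

definition leverage :: "(nat \<Rightarrow> seq) \<Rightarrow> (nat \<Rightarrow> seq) \<Rightarrow> nat \<Rightarrow> nat \<Rightarrow> real" where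
  "leverage s w n j = (cvec_norm (v_vec s w n j))\<^sup>2 / Re (mat_trace (Sigma_mat s w n))"

text \<open>W_n = span{w_1,...,w_n} (0-based: w 0, ..., w (n-1)) and P onto its orthogonal complement.\<close>
definition W_sub :: "(nat \<Rightarrow> seq) \<Rightarrow> nat \<Rightarrow> seq set" where
  "W_sub w n = lin_span w {..<n}"

definition P_perp :: "(nat \<Rightarrow> seq) \<Rightarrow> nat \<Rightarrow> seq \<Rightarrow> seq" where
  "P_perp w n = orth_proj (orth_compl (W_sub w n))"

definition R_prime :: "(nat \<Rightarrow> seq) \<Rightarrow> (nat \<Rightarrow> seq) \<Rightarrow> nat \<Rightarrow> (nat \<Rightarrow> real) \<Rightarrow> ereal" where
  "R_prime s w n p = (SUP j \<in> {j. p j > 0}. ereal ((l2_norm (P_perp w n (s j)))\<^sup>2 / p j))"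

definition Q_op :: "(nat \<Rightarrow> real) \<Rightarrow> nat \<Rightarrow> (nat \<Rightarrow> nat) \<Rightarrow> seq \<Rightarrow> seq" where
  "Q_op p m \<omega> y = (\<lambda>j. (1 / of_nat m) * (\<Sum>t<m. if \<omega> t = j then y j / complex_of_real (p j) else 0))"

definition Sigma_hat :: "(nat \<Rightarrow> seq) \<Rightarrow> (nat \<Rightarrow> seq) \<Rightarrow> nat \<Rightarrow> (nat \<Rightarrow> real) \<Rightarrow> nat \<Rightarrow> (nat \<Rightarrow> nat) \<Rightarrow> complex mat" where
  "Sigma_hat s w n p m \<omega> =
     mat n n (\<lambda>(k, l). iota_U_adj s w n (Q_op p m \<omega> (U_iota s w n (unit_vec n l))) $ k)"

definition Gamma_hat :: "(nat \<Rightarrow> seq) \<Rightarrow> (nat \<Rightarrow> seq) \<Rightarrow> nat \<Rightarrow> (nat \<Rightarrow> real) \<Rightarrow> nat \<Rightarrow> (nat \<Rightarrow> nat) \<Rightarrow> seq \<Rightarrow> complex vec" where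
  "Gamma_hat s w n p m \<omega> h = iota_U_adj s w n (Q_op p m \<omega> (analysis_op s (P_perp w n h)))"

definition K_const :: "(nat \<Rightarrow> seq) \<Rightarrow> (nat \<Rightarrow> seq) \<Rightarrow> nat \<Rightarrow> (nat \<Rightarrow> real) \<Rightarrow> nat \<Rightarrow> (nat \<Rightarrow> nat) \<Rightarrow> real" where
  "K_const s w n p m \<omega> =
     l2_opnorm (\<lambda>h. W_iota w n (mat_inv (Sigma_hat s w n p m \<omega>) *\<^sub>v Gamma_hat s w n p m \<omega> h))"

definition LS_obj :: "(nat \<Rightarrow> seq) \<Rightarrow> (nat \<Rightarrow> seq) \<Rightarrow> nat \<Rightarrow> (nat \<Rightarrow> real) \<Rightarrow> nat \<Rightarrow> (nat \<Rightarrow> nat) \<Rightarrow> seq \<Rightarrow> complex vec \<Rightarrow> real" where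
  "LS_obj s w n p m \<omega> f x =
     (\<Sum>t<m. (cmod (l2_inner (W_iota w n x) (s (\<omega> t)) - l2_inner f (s (\<omega> t))))\<^sup>2 / p (\<omega> t))"

definition is_LS_minimizer :: "(nat \<Rightarrow> seq) \<Rightarrow> (nat \<Rightarrow> seq) \<Rightarrow> nat \<Rightarrow> (nat \<Rightarrow> real) \<Rightarrow> nat \<Rightarrow> (nat \<Rightarrow> nat) \<Rightarrow> seq \<Rightarrow> complex vec \<Rightarrow> bool" where
  "is_LS_minimizer s w n p m \<omega> f x \<longleftrightarrow> x \<in> carrier_vec n \<and>
     (\<forall>y \<in> carrier_vec n. LS_obj s w n p m \<omega> f x \<le> LS_obj s w n p m \<omega> f y)"

text \<open>Law of (i_1,...,i_m): i.i.d. with law p (indices 0..m-1).\<close>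
definition sample_pmf :: "(nat \<Rightarrow> real) \<Rightarrow> nat \<Rightarrow> (nat \<Rightarrow> nat) pmf" where
  "sample_pmf p m = Pi_pmf {..<m} 0 (\<lambda>_. embed_pmf p)"

end

theory Submission
  imports Defs "Jordan_Normal_Form.Determinant"
begin

lemma cnj_suminf:
  assumes "summable f"
  shows "cnj (suminf f) = (\<Sum>j. cnj (f j))"
proof -
  have "f sums suminf f" using assms by (rule summable_sums)
  then have "(\<lambda>j. cnj (f j)) sums cnj (suminf f)" by (simp add: sums_cnj)
  then show ?thesis by (simp add: sums_unique)
qed

lemma l2_iff: "x \<in> l2 \<longleftrightarrow> summable (\<lambda>j. (cmod (x j))\<^sup>2)"
  by (simp add: l2_def)

lemma prod_le_sq: "cmod (a * cnj b) \<le> (cmod a)\<^sup>2 + (cmod b)\<^sup>2"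
proof -
  have "2 * (cmod a * cmod b) \<le> (cmod a)\<^sup>2 + (cmod b)\<^sup>2"
    using sum_squares_bound[of "cmod a" "cmod b"] by (simp add: mult.assoc)
  moreover have "0 \<le> cmod a * cmod b" by simp
  ultimately show ?thesis by (simp add: norm_mult, linarith)
qed

lemma prod_le_sq2: "cmod (a * cnj b) \<le> ((cmod a)\<^sup>2 + (cmod b)\<^sup>2) / 2"
proof -
  have "2 * (cmod a * cmod b) \<le> (cmod a)\<^sup>2 + (cmod b)\<^sup>2"
    using sum_squares_bound[of "cmod a" "cmod b"] by (simp add: mult.assoc)
  then show ?thesis by (simp add: norm_mult)
qed

lemma l2_prod_summable_norm:
  assumes "x \<in> l2" "y \<in> l2"
  shows "summable (\<lambda>j. cmod (x j * cnj (y j)))"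
proof (rule summable_comparison_test[where g = "\<lambda>j. (cmod (x j))\<^sup>2 + (cmod (y j))\<^sup>2"])
  show "\<exists>N. \<forall>n\<ge>N. norm (cmod (x n * cnj (y n))) \<le> (cmod (x n))\<^sup>2 + (cmod (y n))\<^sup>2"
    using prod_le_sq[of "x _" "y _"] by simp
  show "summable (\<lambda>j. (cmod (x j))\<^sup>2 + (cmod (y j))\<^sup>2)"
    using assms by (intro summable_add) (auto simp: l2_def)
qed

lemma l2_prod_summable:
  assumes "x \<in> l2" "y \<in> l2"
  shows "summable (\<lambda>j. x j * cnj (y j))"
  by (rule summable_norm_cancel[OF l2_prod_summable_norm[OF assms]])

lemma l2_zero[simp]: "(\<lambda>j. 0) \<in> l2"
  by (simp add: l2_def)

lemma l2_add:
  assumes "x \<in> l2" "y \<in> l2"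
  shows "(\<lambda>j. x j + y j) \<in> l2"
  unfolding l2_def
proof (simp, rule summable_comparison_test[where g = "\<lambda>j. 2 * (cmod (x j))\<^sup>2 + 2 * (cmod (y j))\<^sup>2"])
  show "\<exists>N. \<forall>n\<ge>N. norm ((cmod (x n + y n))\<^sup>2) \<le> 2 * (cmod (x n))\<^sup>2 + 2 * (cmod (y n))\<^sup>2"
  proof (intro exI allI impI)
    fix n
    have "cmod (x n + y n) \<le> cmod (x n) + cmod (y n)" by (rule norm_triangle_ineq)
    then have "(cmod (x n + y n))\<^sup>2 \<le> (cmod (x n) + cmod (y n))\<^sup>2"
      by (simp add: power_mono)
    also have "\<dots> \<le> 2 * (cmod (x n))\<^sup>2 + 2 * (cmod (y n))\<^sup>2"
      using sum_squares_bound[of "cmod (x n)" "cmod (y n)"] by (simp add: power2_sum)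
    finally show "norm ((cmod (x n + y n))\<^sup>2) \<le> 2 * (cmod (x n))\<^sup>2 + 2 * (cmod (y n))\<^sup>2" by simp
  qed
  show "summable (\<lambda>j. 2 * (cmod (x j))\<^sup>2 + 2 * (cmod (y j))\<^sup>2)"
    using assms by (intro summable_add summable_mult) (auto simp: l2_def)
qed

lemma l2_scale:
  assumes "x \<in> l2"
  shows "(\<lambda>j. c * x j) \<in> l2"
  using assms unfolding l2_def by (simp add: norm_mult power_mult_distrib summable_mult)

lemma l2_uminus:
  assumes "x \<in> l2"
  shows "(\<lambda>j. - x j) \<in> l2"
  using assms unfolding l2_def by simp

lemma l2_diff:
  assumes "x \<in> l2" "y \<in> l2"
  shows "(\<lambda>j. x j - y j) \<in> l2"
  using l2_add[OF assms(1) l2_uminus[OF assms(2)]] by simp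

lemma l2_sum:
  assumes "finite F" "\<And>k. k \<in> F \<Longrightarrow> f k \<in> l2"
  shows "(\<lambda>j. \<Sum>k\<in>F. f k j) \<in> l2"
  using assms
proof (induction F rule: finite_induct)
  case empty then show ?case by simp
next
  case (insert a F)
  then show ?case using l2_add[of "f a" "\<lambda>j. \<Sum>k\<in>F. f k j"] by simp
qed

lemma l2_lincomb:
  assumes "finite F" "\<And>k. k \<in> F \<Longrightarrow> f k \<in> l2"
  shows "(\<lambda>j. \<Sum>k\<in>F. c k * f k j) \<in> l2"
proof -
  have "\<And>k. k \<in> F \<Longrightarrow> (\<lambda>j. c k * f k j) \<in> l2" using assms(2) l2_scale by blast
  then show ?thesis using l2_sum[of F "\<lambda>k j. c k * f k j"] assms(1) by blast
qed

lemma l2_finsupp: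
  assumes "\<And>j. j \<ge> N \<Longrightarrow> x j = 0"
  shows "x \<in> l2"
  unfolding l2_def by (simp, rule summable_finite[of "{..<N}"]) (use assms in auto)

lemma inner_add_left:
  assumes "x \<in> l2" "y \<in> l2" "z \<in> l2"
  shows "l2_inner (\<lambda>j. x j + y j) z = l2_inner x z + l2_inner y z"
proof -
  have "(\<Sum>j. x j * cnj (z j) + y j * cnj (z j)) = (\<Sum>j. x j * cnj (z j)) + (\<Sum>j. y j * cnj (z j))"
    by (rule suminf_add[symmetric, OF l2_prod_summable[OF assms(1,3)] l2_prod_summable[OF assms(2,3)]])
  then show ?thesis unfolding l2_inner_def by (simp add: distrib_right)
qed

lemma inner_scale_left:
  assumes "x \<in> l2" "z \<in> l2"
  shows "l2_inner (\<lambda>j. c * x j) z = c * l2_inner x z"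
proof -
  have "(\<Sum>j. c * (x j * cnj (z j))) = c * (\<Sum>j. x j * cnj (z j))"
    by (rule suminf_mult[OF l2_prod_summable[OF assms]])
  then show ?thesis unfolding l2_inner_def by (simp add: mult.assoc)
qed

lemma inner_sum_left:
  assumes "finite F" "\<And>k. k \<in> F \<Longrightarrow> f k \<in> l2" "z \<in> l2"
  shows "l2_inner (\<lambda>j. \<Sum>k\<in>F. f k j) z = (\<Sum>k\<in>F. l2_inner (f k) z)"
proof -
  have "\<And>k. k \<in> F \<Longrightarrow> summable (\<lambda>j. f k j * cnj (z j))"
    using assms l2_prod_summable by blast
  then have "(\<Sum>j. \<Sum>k\<in>F. f k j * cnj (z j)) = (\<Sum>k\<in>F. \<Sum>j. f k j * cnj (z j))"
    by (rule suminf_sum)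
  then show ?thesis unfolding l2_inner_def by (simp add: sum_distrib_right)
qed

lemma inner_lincomb_left:
  assumes "finite F" "\<And>k. k \<in> F \<Longrightarrow> f k \<in> l2" "z \<in> l2"
  shows "l2_inner (\<lambda>j. \<Sum>k\<in>F. c k * f k j) z = (\<Sum>k\<in>F. c k * l2_inner (f k) z)"
proof -
  have "\<And>k. k \<in> F \<Longrightarrow> (\<lambda>j. c k * f k j) \<in> l2" using assms(2) l2_scale by blast
  then have "l2_inner (\<lambda>j. \<Sum>k\<in>F. c k * f k j) z = (\<Sum>k\<in>F. l2_inner (\<lambda>j. c k * f k j) z)"
    by (rule inner_sum_left[OF assms(1) _ assms(3)])
  also have "\<dots> = (\<Sum>k\<in>F. c k * l2_inner (f k) z)"
    by (rule sum.cong[OF refl], rule inner_scale_left[OF assms(2) assms(3)])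
  finally show ?thesis .
qed

lemma inner_cnj:
  assumes "x \<in> l2" "y \<in> l2"
  shows "cnj (l2_inner x y) = l2_inner y x"
proof -
  have "cnj (\<Sum>j. x j * cnj (y j)) = (\<Sum>j. cnj (x j * cnj (y j)))"
    by (rule cnj_suminf[OF l2_prod_summable[OF assms]])
  then show ?thesis unfolding l2_inner_def by (simp add: ac_simps)
qed

lemma inner_diff_left:
  assumes "x \<in> l2" "y \<in> l2" "z \<in> l2"
  shows "l2_inner (\<lambda>j. x j - y j) z = l2_inner x z - l2_inner y z"
proof -
  have e: "(\<lambda>j. x j - y j) = (\<lambda>j. x j + (-1) * y j)" by simp
  have "l2_inner (\<lambda>j. x j + (-1) * y j) z = l2_inner x z + l2_inner (\<lambda>j. (-1) * y j) z"
    by (rule inner_add_left[OF assms(1) l2_scale[OF assms(2)] assms(3)])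
  also have "l2_inner (\<lambda>j. (-1) * y j) z = (-1) * l2_inner y z"
    by (rule inner_scale_left[OF assms(2,3)])
  finally show ?thesis unfolding e by simp
qed

lemma inner_zero_left[simp]: "l2_inner (\<lambda>j. 0) z = 0"
  by (simp add: l2_inner_def)

lemma inner_right_via_cnj:
  assumes "x \<in> l2" "y \<in> l2"
  shows "l2_inner x y = cnj (l2_inner y x)"
  using inner_cnj[OF assms(2,1)] by simp

lemma inner_lincomb_right:
  assumes "finite F" "\<And>k. k \<in> F \<Longrightarrow> f k \<in> l2" "z \<in> l2"
  shows "l2_inner z (\<lambda>j. \<Sum>k\<in>F. c k * f k j) = (\<Sum>k\<in>F. cnj (c k) * l2_inner z (f k))"
proof -
  have "l2_inner z (\<lambda>j. \<Sum>k\<in>F. c k * f k j) = cnj (l2_inner (\<lambda>j. \<Sum>k\<in>F. c k * f k j) z)"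
    using assms l2_lincomb by (intro inner_right_via_cnj) auto
  also have "\<dots> = cnj (\<Sum>k\<in>F. c k * l2_inner (f k) z)"
    using inner_lincomb_left[OF assms] by simp
  also have "\<dots> = (\<Sum>k\<in>F. cnj (c k) * l2_inner z (f k))"
    using assms by (simp add: inner_cnj)
  finally show ?thesis .
qed

lemma norm_sq:
  assumes "x \<in> l2"
  shows "(l2_norm x)\<^sup>2 = (\<Sum>j. (cmod (x j))\<^sup>2)"
proof -
  have "summable (\<lambda>j. (cmod (x j))\<^sup>2)" using assms by (simp add: l2_def)
  then have "0 \<le> (\<Sum>j. (cmod (x j))\<^sup>2)" by (rule suminf_nonneg) simp
  then show ?thesis by (simp add: l2_norm_def)
qed

lemma norm_nonneg: "x \<in> l2 \<Longrightarrow> 0 \<le> l2_norm x"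
  using norm_sq[of x] by (simp add: l2_norm_def l2_def suminf_nonneg)

lemma mult_cnj_self: "z * cnj z = complex_of_real ((cmod z)\<^sup>2)"
  by (metis complex_norm_square of_real_power)

lemma inner_self:
  assumes "x \<in> l2"
  shows "l2_inner x x = complex_of_real ((l2_norm x)\<^sup>2)"
proof -
  have "l2_inner x x = (\<Sum>j. complex_of_real ((cmod (x j))\<^sup>2))"
    unfolding l2_inner_def by (simp only: mult_cnj_self)
  also have "\<dots> = complex_of_real (\<Sum>j. (cmod (x j))\<^sup>2)"
    using assms by (simp add: l2_def suminf_of_real)
  finally show ?thesis using norm_sq[OF assms] by simp
qed

lemma norm_zero_imp:
  assumes "x \<in> l2" "l2_norm x = 0"
  shows "x j = 0"
proof -
  have s: "summable (\<lambda>j. (cmod (x j))\<^sup>2)" using assms l2_def by auto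
  have "(\<Sum>j. (cmod (x j))\<^sup>2) = 0" using norm_sq[OF assms(1)] assms(2) by simp
  then have "\<forall>j. (cmod (x j))\<^sup>2 = 0"
    using suminf_eq_zero_iff[OF s] by simp
  then show ?thesis by simp
qed

lemma norm_of_zero[simp]: "l2_norm (\<lambda>j. 0) = 0"
  by (simp add: l2_norm_def)

lemma inner_bound:
  assumes "x \<in> l2" "y \<in> l2"
  shows "cmod (l2_inner x y) \<le> ((l2_norm x)\<^sup>2 + (l2_norm y)\<^sup>2) / 2"
proof -
  have s1: "summable (\<lambda>j. cmod (x j * cnj (y j)))" by (rule l2_prod_summable_norm[OF assms])
  have sx: "summable (\<lambda>j. (cmod (x j))\<^sup>2)" and sy: "summable (\<lambda>j. (cmod (y j))\<^sup>2)"
    using assms by (auto simp: l2_def)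
  have "cmod (l2_inner x y) \<le> (\<Sum>j. cmod (x j * cnj (y j)))"
    unfolding l2_inner_def by (rule summable_norm[OF s1])
  also have "\<dots> \<le> (\<Sum>j. ((cmod (x j))\<^sup>2 + (cmod (y j))\<^sup>2) / 2)"
    using s1 sx sy prod_le_sq2 by (intro suminf_le) (auto intro!: summable_divide summable_add)
  also have "\<dots> = ((\<Sum>j. (cmod (x j))\<^sup>2) + (\<Sum>j. (cmod (y j))\<^sup>2)) / 2"
    using sx sy by (simp add: suminf_divide[symmetric] suminf_add summable_add)
  finally show ?thesis using norm_sq assms by simp
qed

lemma pythag:
  assumes "x \<in> l2" "y \<in> l2" "l2_inner x y = 0"
  shows "(l2_norm (\<lambda>j. x j + y j))\<^sup>2 = (l2_norm x)\<^sup>2 + (l2_norm y)\<^sup>2"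
proof -
  have xy: "(\<lambda>j. x j + y j) \<in> l2" using l2_add assms by auto
  have yx: "l2_inner y x = 0" using inner_cnj[OF assms(1,2)] assms(3) by simp
  have "l2_inner (\<lambda>j. x j + y j) (\<lambda>j. x j + y j)
        = l2_inner x (\<lambda>j. x j + y j) + l2_inner y (\<lambda>j. x j + y j)"
    using inner_add_left assms xy by auto
  also have "l2_inner x (\<lambda>j. x j + y j) = cnj (l2_inner (\<lambda>j. x j + y j) x)"
    using inner_cnj xy assms by auto
  also have "l2_inner (\<lambda>j. x j + y j) x = l2_inner x x + l2_inner y x"
    using inner_add_left assms by auto
  also have "l2_inner y (\<lambda>j. x j + y j) = cnj (l2_inner (\<lambda>j. x j + y j) y)"
    using inner_cnj xy assms by auto
  also have "l2_inner (\<lambda>j. x j + y j) y = l2_inner x y + l2_inner y y"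
    using inner_add_left assms by auto
  finally have "complex_of_real ((l2_norm (\<lambda>j. x j + y j))\<^sup>2) =
      complex_of_real ((l2_norm x)\<^sup>2) + complex_of_real ((l2_norm y)\<^sup>2)"
    using inner_self assms xy yx by simp
  then show ?thesis by (metis of_real_add of_real_eq_iff)
qed

definition Wz :: "(nat \<Rightarrow> seq) \<Rightarrow> nat \<Rightarrow> (nat \<Rightarrow> complex) \<Rightarrow> seq" where
  "Wz w n z = (\<lambda>j. \<Sum>k<n. z k * w k j)"

definition nsq :: "nat \<Rightarrow> (nat \<Rightarrow> complex) \<Rightarrow> real" where
  "nsq n z = (\<Sum>k<n. (cmod (z k))\<^sup>2)"

lemma nsq_nonneg: "0 \<le> nsq n z"
  unfolding nsq_def by (simp add: sum_nonneg)

lemma nsq_zero: "nsq n z = 0 \<Longrightarrow> k < n \<Longrightarrow> z k = 0"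
  unfolding nsq_def using sum_nonneg_eq_0_iff[of "{..<n}" "\<lambda>k. (cmod (z k))\<^sup>2"] by auto

lemma riesz_l2: "is_riesz_basis w C D \<Longrightarrow> w k \<in> l2"
  unfolding is_riesz_basis_def by auto

lemma frame_l2: "is_frame s A B \<Longrightarrow> s k \<in> l2"
  unfolding is_frame_def by auto

lemma Wz_l2: "is_riesz_basis w C D \<Longrightarrow> Wz w n z \<in> l2"
  unfolding Wz_def by (rule l2_lincomb) (auto simp: riesz_l2)

lemma Wz_lin_span: "Wz w n z \<in> lin_span w I" if "{..<n} \<subseteq> I"
  unfolding Wz_def lin_span_def using that by blast

lemma Wz_sub: "Wz w n z \<in> W_sub w n"
  unfolding W_sub_def by (rule Wz_lin_span) simp

lemma in_closed_span: "v \<in> l2 \<Longrightarrow> v \<in> lin_span w UNIV \<Longrightarrow> v \<in> closed_span w"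
  unfolding closed_span_def l2_closure_def by force

lemma sum_lessThan_extend:
  fixes n N :: nat
  assumes "n \<le> N" "\<And>k. n \<le> k \<Longrightarrow> k < N \<Longrightarrow> g k = 0"
  shows "(\<Sum>k<N. g k) = (\<Sum>k<n. g k)"
proof (rule sum.mono_neutral_right)
  show "finite {..<N}" by simp
  show "{..<n} \<subseteq> {..<N}" using assms(1) by auto
  show "\<forall>i\<in>{..<N} - {..<n}. g i = 0" using assms(2) by auto
qed

lemma riesz_fin:
  assumes "is_riesz_basis w C D"
  shows "C * nsq n z \<le> (l2_norm (Wz w n z))\<^sup>2 \<and> (l2_norm (Wz w n z))\<^sup>2 \<le> D * nsq n z"
proof -
  define x where "x = (\<lambda>k. if k < n then z k else 0)"
  have xl2: "x \<in> l2" by (rule l2_finsupp[of n]) (simp add: x_def)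
  from assms xl2 obtain h where h: "h \<in> l2" "l2_sums (\<lambda>k j. x k * w k j) h"
     "C * (l2_norm x)\<^sup>2 \<le> (l2_norm h)\<^sup>2" "(l2_norm h)\<^sup>2 \<le> D * (l2_norm x)\<^sup>2"
    unfolding is_riesz_basis_def by blast
  have part: "(\<lambda>j. \<Sum>k<N. x k * w k j) = Wz w n z" if "N \<ge> n" for N
  proof
    fix j
    have "(\<Sum>k<N. x k * w k j) = (\<Sum>k<n. x k * w k j)"
      by (rule sum_lessThan_extend) (use that in \<open>auto simp: x_def\<close>)
    also have "\<dots> = (\<Sum>k<n. z k * w k j)" by (rule sum.cong) (auto simp: x_def)
    finally show "(\<Sum>k<N. x k * w k j) = Wz w n z j" by (simp add: Wz_def)
  qed
  have lim: "(\<lambda>N. l2_norm (\<lambda>j. h j - (\<Sum>k<N. x k * w k j))) \<longlonglongrightarrow> 0"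
    using h(2) by (simp add: l2_sums_def)
  then have "(\<lambda>N. l2_norm (\<lambda>j. h j - (\<Sum>k<N + n. x k * w k j))) \<longlonglongrightarrow> 0"
    by (rule LIMSEQ_ignore_initial_segment)
  moreover have "\<And>N. (\<lambda>j. h j - (\<Sum>k<N + n. x k * w k j)) = (\<lambda>j. h j - Wz w n z j)"
  proof -
    fix N
    have "(\<lambda>j. \<Sum>k<N + n. x k * w k j) = Wz w n z" by (rule part) simp
    then show "(\<lambda>j. h j - (\<Sum>k<N + n. x k * w k j)) = (\<lambda>j. h j - Wz w n z j)"
      by (metis (no_types))
  qed
  ultimately have "(\<lambda>N. l2_norm (\<lambda>j. h j - Wz w n z j)) \<longlonglongrightarrow> 0" by simp
  then have n0: "l2_norm (\<lambda>j. h j - Wz w n z j) = 0" by (simp add: LIMSEQ_const_iff)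
  have dl2: "(\<lambda>j. h j - Wz w n z j) \<in> l2" by (rule l2_diff[OF h(1) Wz_l2[OF assms]])
  have hW: "h = Wz w n z"
  proof
    fix j show "h j = Wz w n z j" using norm_zero_imp[OF dl2 n0, of j] by simp
  qed
  have "(l2_norm x)\<^sup>2 = (\<Sum>j. (cmod (x j))\<^sup>2)" by (rule norm_sq[OF xl2])
  also have "\<dots> = (\<Sum>j<n. (cmod (x j))\<^sup>2)"
    by (rule suminf_finite) (auto simp: x_def)
  also have "\<dots> = nsq n z" unfolding nsq_def by (rule sum.cong) (auto simp: x_def)
  finally have "(l2_norm x)\<^sup>2 = nsq n z" .
  then show ?thesis using h(3,4) hW by simp
qed

lemma Wz_inner:
  assumes "is_riesz_basis w C D" "v \<in> l2"
  shows "l2_inner (Wz w n z) v = (\<Sum>k<n. z k * l2_inner (w k) v)"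
  unfolding Wz_def by (rule inner_lincomb_left) (use assms riesz_l2 in auto)

lemma lower_key:
  assumes fr: "is_frame s A B" and rb: "is_riesz_basis w C D" and inc: "closed_span w \<subseteq> closed_span s"
  shows "summable (\<lambda>j. (cmod (\<Sum>k<n. z k * l2_inner (w k) (s j)))\<^sup>2) \<and>
         A * C * nsq n z \<le> (\<Sum>j. (cmod (\<Sum>k<n. z k * l2_inner (w k) (s j)))\<^sup>2)"
proof -
  let ?h = "Wz w n z"
  have hl2: "?h \<in> l2" by (rule Wz_l2[OF rb])
  have "?h \<in> closed_span s"
    using in_closed_span[OF hl2 Wz_lin_span[of n UNIV]] inc by auto
  then have fh: "summable (\<lambda>k. (cmod (l2_inner ?h (s k)))\<^sup>2) \<and>
        A * (l2_norm ?h)\<^sup>2 \<le> (\<Sum>k. (cmod (l2_inner ?h (s k)))\<^sup>2)"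
    using fr unfolding is_frame_def by blast
  have eq: "\<And>j. l2_inner ?h (s j) = (\<Sum>k<n. z k * l2_inner (w k) (s j))"
    by (rule Wz_inner[OF rb frame_l2[OF fr]])
  have A: "0 < A" using fr by (simp add: is_frame_def)
  have "A * C * nsq n z \<le> A * (l2_norm ?h)\<^sup>2"
    using riesz_fin[OF rb, of n z] A by (simp add: mult.assoc)
  moreover have "(\<lambda>j. (cmod (l2_inner ?h (s j)))\<^sup>2) = (\<lambda>j. (cmod (\<Sum>k<n. z k * l2_inner (w k) (s j)))\<^sup>2)"
    using eq by simp
  ultimately show ?thesis using fh by simp
qed

lemma Wz_single: "Wz w (Suc k) (\<lambda>i. if i = k then 1 else 0) = w k"
  unfolding Wz_def by (rule ext) (simp add: if_distrib cong: if_cong)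

lemma nsq_single: "nsq (Suc k) (\<lambda>i. if i = k then 1 else 0) = 1"
  unfolding nsq_def by (simp add: if_distrib cong: if_cong)

lemma wk_bounds:
  assumes fr: "is_frame s A B" and rb: "is_riesz_basis w C D" and inc: "closed_span w \<subseteq> closed_span s"
  shows "summable (\<lambda>j. (cmod (l2_inner (w k) (s j)))\<^sup>2) \<and>
         A * C \<le> (\<Sum>j. (cmod (l2_inner (w k) (s j)))\<^sup>2) \<and>
         (\<Sum>j. (cmod (l2_inner (w k) (s j)))\<^sup>2) \<le> B * D"
proof -
  let ?z = "\<lambda>i. if i = k then (1::complex) else 0"
  have wl2: "w k \<in> l2" by (rule riesz_l2[OF rb])
  have "Wz w (Suc k) ?z \<in> closed_span s"
    using in_closed_span[OF Wz_l2[OF rb] Wz_lin_span[of "Suc k" UNIV]] inc by auto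
  then have "w k \<in> closed_span s" by (simp only: Wz_single)
  then have fh: "summable (\<lambda>j. (cmod (l2_inner (w k) (s j)))\<^sup>2) \<and>
        A * (l2_norm (w k))\<^sup>2 \<le> (\<Sum>j. (cmod (l2_inner (w k) (s j)))\<^sup>2) \<and>
        (\<Sum>j. (cmod (l2_inner (w k) (s j)))\<^sup>2) \<le> B * (l2_norm (w k))\<^sup>2"
    using fr unfolding is_frame_def by blast
  have rf: "C \<le> (l2_norm (w k))\<^sup>2 \<and> (l2_norm (w k))\<^sup>2 \<le> D"
    using riesz_fin[OF rb, of "Suc k" ?z] by (simp add: Wz_single nsq_single)
  have A: "0 < A" "A \<le> B" using fr by (auto simp: is_frame_def)
  have "A * C \<le> A * (l2_norm (w k))\<^sup>2" using rf A by simp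
  moreover have "B * (l2_norm (w k))\<^sup>2 \<le> B * D" using rf A by simp
  ultimately show ?thesis using fh by linarith
qed

lemma matvec_idx:
  assumes "A \<in> carrier_mat n n" "y \<in> carrier_vec n" "k < n"
  shows "(A *\<^sub>v y) $ k = (\<Sum>l<n. A $$ (k,l) * y $ l)"
proof -
  have "(A *\<^sub>v y) $ k = row A k \<bullet> y" using assms by simp
  also have "\<dots> = (\<Sum>l\<in>{0..<n}. row A k $ l * y $ l)" using assms by (simp add: scalar_prod_def)
  also have "\<dots> = (\<Sum>l<n. A $$ (k,l) * y $ l)"
    unfolding atLeast0LessThan using assms by (intro sum.cong) auto
  finally show ?thesis .
qed

lemma inverse_from_kernel:
  assumes A: "(A :: complex mat) \<in> carrier_mat n n"
  and ker: "\<And>v. v \<in> carrier_vec n \<Longrightarrow> A *\<^sub>v v = 0\<^sub>v n \<Longrightarrow> v = 0\<^sub>v n"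
  shows "\<exists>B. B \<in> carrier_mat n n \<and> A * B = 1\<^sub>m n \<and> B * A = 1\<^sub>m n"
proof -
  have "det A \<noteq> 0" using det_0_iff_vec_prod_zero_field[OF A] ker by blast
  then have "A \<in> Units (ring_mat TYPE(complex) n ())" by (rule det_non_zero_imp_unit[OF A])
  then show ?thesis unfolding Units_def ring_mat_def by auto
qed

lemma invertible_from_kernel:
  assumes A: "(A :: complex mat) \<in> carrier_mat n n"
  and ker: "\<And>v. v \<in> carrier_vec n \<Longrightarrow> A *\<^sub>v v = 0\<^sub>v n \<Longrightarrow> v = 0\<^sub>v n"
  shows "invertible_mat A"
proof -
  obtain B where B: "B \<in> carrier_mat n n" "A * B = 1\<^sub>m n" "B * A = 1\<^sub>m n"
    using inverse_from_kernel[OF A ker] by blast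
  then show ?thesis using A unfolding invertible_mat_def inverts_mat_def square_mat.simps by auto
qed

definition gram :: "(nat \<Rightarrow> seq) \<Rightarrow> nat \<Rightarrow> complex mat" where
  "gram w n = mat n n (\<lambda>(k,l). l2_inner (w l) (w k))"

lemma Wz_self_inner:
  assumes rb: "is_riesz_basis w C D"
  shows "l2_inner (Wz w n y) (Wz w n y) = (\<Sum>k<n. cnj (y k) * (\<Sum>l<n. l2_inner (w l) (w k) * y l))"
proof -
  have "l2_inner (Wz w n y) (Wz w n y) = (\<Sum>l<n. y l * l2_inner (w l) (Wz w n y))"
    by (rule Wz_inner[OF rb Wz_l2[OF rb]])
  also have "\<dots> = (\<Sum>l<n. y l * (\<Sum>k<n. cnj (y k) * l2_inner (w l) (w k)))"
  proof (rule sum.cong[OF refl])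
    fix l
    show "y l * l2_inner (w l) (Wz w n y) = y l * (\<Sum>k<n. cnj (y k) * l2_inner (w l) (w k))"
      unfolding Wz_def using inner_lincomb_right[of "{..<n}" w "w l" y] riesz_l2[OF rb] by simp
  qed
  also have "\<dots> = (\<Sum>l<n. \<Sum>k<n. cnj (y k) * (l2_inner (w l) (w k) * y l))"
    by (simp add: sum_distrib_left ac_simps)
  also have "\<dots> = (\<Sum>k<n. \<Sum>l<n. cnj (y k) * (l2_inner (w l) (w k) * y l))"
    by (rule sum.swap)
  also have "\<dots> = (\<Sum>k<n. cnj (y k) * (\<Sum>l<n. l2_inner (w l) (w k) * y l))"
    by (simp add: sum_distrib_left)
  finally show ?thesis .
qed

lemma gram_ker:
  assumes rb: "is_riesz_basis w C D" and v: "v \<in> carrier_vec n" and z: "gram w n *\<^sub>v v = 0\<^sub>v n"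
  shows "v = 0\<^sub>v n"
proof -
  define y where "y = (\<lambda>l. v $ l)"
  have G: "gram w n \<in> carrier_mat n n" by (simp add: gram_def)
  have "\<And>k. k < n \<Longrightarrow> (\<Sum>l<n. l2_inner (w l) (w k) * y l) = 0"
  proof -
    fix k assume k: "k < n"
    have "(gram w n *\<^sub>v v) $ k = 0" using z k by simp
    then show "(\<Sum>l<n. l2_inner (w l) (w k) * y l) = 0"
      using matvec_idx[OF G v k] k by (simp add: gram_def y_def)
  qed
  then have "l2_inner (Wz w n y) (Wz w n y) = 0" using Wz_self_inner[OF rb] by simp
  then have "(l2_norm (Wz w n y))\<^sup>2 = 0" using inner_self[OF Wz_l2[OF rb]] by simp
  moreover have C: "0 < C" using rb by (simp add: is_riesz_basis_def)
  ultimately have "C * nsq n y \<le> 0" using riesz_fin[OF rb, of n y] by simp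
  then have "nsq n y \<le> 0" using C by (simp add: mult_le_0_iff)
  then have "nsq n y = 0" using nsq_nonneg[of n y] by simp
  then have "\<And>k. k < n \<Longrightarrow> v $ k = 0" using nsq_zero unfolding y_def by blast
  then show ?thesis using v by (intro eq_vecI) auto
qed

lemma wl_sub: "l < n \<Longrightarrow> w l \<in> W_sub w n"
  unfolding W_sub_def lin_span_def
  by (rule CollectI, rule exI[of _ "{l}"], rule exI[of _ "\<lambda>_. 1"]) auto

lemma sub_l2: "is_riesz_basis w C D \<Longrightarrow> v \<in> W_sub w n \<Longrightarrow> v \<in> l2"
  unfolding W_sub_def lin_span_def using l2_lincomb riesz_l2 by blast

lemma orth_Wz:
  assumes rb: "is_riesz_basis w C D" and u: "u \<in> orth_compl (W_sub w n)"
  shows "l2_inner (Wz w n y) u = 0" "l2_inner u (Wz w n y) = 0"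
proof -
  have ul2: "u \<in> l2" using u by (simp add: orth_compl_def)
  show "l2_inner u (Wz w n y) = 0" using u Wz_sub by (auto simp: orth_compl_def)
  have "\<And>l. l < n \<Longrightarrow> l2_inner (w l) u = 0"
  proof -
    fix l assume "l < n"
    then have "l2_inner u (w l) = 0" using u wl_sub by (auto simp: orth_compl_def)
    then show "l2_inner (w l) u = 0" using inner_cnj[OF ul2 riesz_l2[OF rb]] by (metis complex_cnj_zero)
  qed
  then show "l2_inner (Wz w n y) u = 0" using Wz_inner[OF rb ul2] by simp
qed

lemma orth_compl_diff:
  assumes rb: "is_riesz_basis w C D" and u: "u \<in> orth_compl (W_sub w n)" and v: "v \<in> orth_compl (W_sub w n)"
  shows "(\<lambda>j. u j - v j) \<in> orth_compl (W_sub w n)"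
  using u v l2_diff inner_diff_left sub_l2[OF rb] by (simp add: orth_compl_def)

lemma orth_compl_scale:
  assumes rb: "is_riesz_basis w C D" and u: "u \<in> orth_compl (W_sub w n)"
  shows "(\<lambda>j. c * u j) \<in> orth_compl (W_sub w n)"
  using u l2_scale inner_scale_left sub_l2[OF rb] by (simp add: orth_compl_def)

lemma proj_unique:
  assumes rb: "is_riesz_basis w C D" and h: "h \<in> l2"
    and p: "p \<in> orth_compl (W_sub w n)" and q: "q \<in> orth_compl (W_sub w n)"
    and hp: "\<forall>v\<in>orth_compl (W_sub w n). l2_inner (\<lambda>j. h j - p j) v = 0"
    and hq: "\<forall>v\<in>orth_compl (W_sub w n). l2_inner (\<lambda>j. h j - q j) v = 0"
  shows "p = q"
proof -
  define d where "d = (\<lambda>j. p j - q j)"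
  have d: "d \<in> orth_compl (W_sub w n)" unfolding d_def by (rule orth_compl_diff[OF rb p q])
  have pl2: "p \<in> l2" and ql2: "q \<in> l2" and dl2: "d \<in> l2" using p q d by (auto simp: orth_compl_def)
  have "l2_inner (\<lambda>j. (h j - q j) - (h j - p j)) d = l2_inner (\<lambda>j. h j - q j) d - l2_inner (\<lambda>j. h j - p j) d"
    by (rule inner_diff_left) (use h pl2 ql2 dl2 l2_diff in auto)
  also have "\<dots> = 0" using hp hq d by simp
  also have "(\<lambda>j. (h j - q j) - (h j - p j)) = d" by (auto simp: d_def)
  finally have "l2_inner d d = 0" .
  then have "l2_norm d = 0" using inner_self[OF dl2] by simp
  then have "\<And>j. d j = 0" using norm_zero_imp[OF dl2] by blast
  then show ?thesis by (auto simp: d_def)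
qed

lemma proj_exists:
  assumes rb: "is_riesz_basis w C D" and h: "h \<in> l2"
  shows "\<exists>y. (\<lambda>j. h j - Wz w n y j) \<in> orth_compl (W_sub w n)"
proof -
  have G: "gram w n \<in> carrier_mat n n" by (simp add: gram_def)
  obtain Gi where Gi: "Gi \<in> carrier_mat n n" "gram w n * Gi = 1\<^sub>m n" "Gi * gram w n = 1\<^sub>m n"
    using inverse_from_kernel[OF G gram_ker[OF rb]] by blast
  define r where "r = vec n (\<lambda>k. l2_inner h (w k))"
  define yv where "yv = Gi *\<^sub>v r"
  have r: "r \<in> carrier_vec n" by (simp add: r_def)
  have yv: "yv \<in> carrier_vec n" using Gi r by (simp add: yv_def)
  have Gy: "gram w n *\<^sub>v yv = r"
    unfolding yv_def using assoc_mult_mat_vec[OF G Gi(1) r, symmetric] Gi(2) r by simp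
  define y where "y = (\<lambda>l. yv $ l)"
  have eqk: "(\<Sum>l<n. l2_inner (w l) (w k) * y l) = l2_inner h (w k)" if k: "k < n" for k
  proof -
    have "(gram w n *\<^sub>v yv) $ k = r $ k" using Gy by simp
    then show ?thesis using matvec_idx[OF G yv k] k by (simp add: gram_def y_def r_def)
  qed
  define p where "p = (\<lambda>j. h j - Wz w n y j)"
  have pl2: "p \<in> l2" unfolding p_def by (rule l2_diff[OF h Wz_l2[OF rb]])
  have pk: "l2_inner p (w k) = 0" if k: "k < n" for k
  proof -
    have "l2_inner p (w k) = l2_inner h (w k) - l2_inner (Wz w n y) (w k)"
      unfolding p_def by (rule inner_diff_left[OF h Wz_l2[OF rb] riesz_l2[OF rb]])
    also have "l2_inner (Wz w n y) (w k) = (\<Sum>l<n. y l * l2_inner (w l) (w k))"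
      by (rule Wz_inner[OF rb riesz_l2[OF rb]])
    finally show ?thesis using eqk[OF k] by (simp add: ac_simps)
  qed
  have "p \<in> orth_compl (W_sub w n)"
    unfolding orth_compl_def
  proof (intro CollectI conjI ballI)
    show "p \<in> l2" by (rule pl2)
    fix v assume "v \<in> W_sub w n"
    then obtain F c where F: "finite F" "F \<subseteq> {..<n}" and v: "v = (\<lambda>j. \<Sum>k\<in>F. c k * w k j)"
      unfolding W_sub_def lin_span_def by blast
    have "l2_inner p v = (\<Sum>k\<in>F. cnj (c k) * l2_inner p (w k))"
      unfolding v by (rule inner_lincomb_right[OF F(1) riesz_l2[OF rb] pl2])
    also have "\<dots> = 0" using pk F(2) by (intro sum.neutral) auto
    finally show "l2_inner p v = 0" .
  qed
  then show ?thesis unfolding p_def by blast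
qed

lemma P_perp_props:
  assumes rb: "is_riesz_basis w C D" and h: "h \<in> l2"
  shows "P_perp w n h \<in> orth_compl (W_sub w n) \<and> (\<exists>y. \<forall>j. h j - P_perp w n h j = Wz w n y j)"
proof -
  obtain y where p: "(\<lambda>j. h j - Wz w n y j) \<in> orth_compl (W_sub w n)"
    using proj_exists[OF rb h] by blast
  define p where "p = (\<lambda>j. h j - Wz w n y j)"
  have pV: "p \<in> orth_compl (W_sub w n)" using p by (simp add: p_def)
  have hp: "\<forall>v\<in>orth_compl (W_sub w n). l2_inner (\<lambda>j. h j - p j) v = 0"
  proof
    fix v assume v: "v \<in> orth_compl (W_sub w n)"
    have "(\<lambda>j. h j - p j) = Wz w n y" by (auto simp: p_def)
    then show "l2_inner (\<lambda>j. h j - p j) v = 0" using orth_Wz(1)[OF rb v] by simp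
  qed
  have "P_perp w n h = p"
    unfolding P_perp_def orth_proj_def
  proof (rule the_equality)
    show "p \<in> orth_compl (W_sub w n) \<and> (\<forall>v\<in>orth_compl (W_sub w n). l2_inner (\<lambda>j. h j - p j) v = 0)"
      using pV hp by blast
    fix q assume "q \<in> orth_compl (W_sub w n) \<and> (\<forall>v\<in>orth_compl (W_sub w n). l2_inner (\<lambda>j. h j - q j) v = 0)"
    then show "q = p" using proj_unique[OF rb h _ pV _ hp] by blast
  qed
  then show ?thesis using pV by (auto simp: p_def)
qed

lemma P_fix:
  assumes rb: "is_riesz_basis w C D" and u: "u \<in> orth_compl (W_sub w n)"
  shows "P_perp w n u = u"
proof -
  have ul2: "u \<in> l2" using u by (simp add: orth_compl_def)
  have hu: "\<forall>v\<in>orth_compl (W_sub w n). l2_inner (\<lambda>j. u j - u j) v = 0" by simp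
  show ?thesis
    unfolding P_perp_def orth_proj_def
  proof (rule the_equality)
    show "u \<in> orth_compl (W_sub w n) \<and> (\<forall>v\<in>orth_compl (W_sub w n). l2_inner (\<lambda>j. u j - u j) v = 0)"
      using u hu by blast
    fix q assume "q \<in> orth_compl (W_sub w n) \<and> (\<forall>v\<in>orth_compl (W_sub w n). l2_inner (\<lambda>j. u j - q j) v = 0)"
    then show "q = u" using proj_unique[OF rb ul2 _ u _ hu] by blast
  qed
qed

lemma P_l2: "is_riesz_basis w C D \<Longrightarrow> h \<in> l2 \<Longrightarrow> P_perp w n h \<in> l2"
  using P_perp_props by (auto simp: orth_compl_def)

lemma P_norm_le:
  assumes rb: "is_riesz_basis w C D" and h: "h \<in> l2"
  shows "l2_norm (P_perp w n h) \<le> l2_norm h"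
proof -
  obtain y where y: "\<forall>j. h j - P_perp w n h j = Wz w n y j" and pV: "P_perp w n h \<in> orth_compl (W_sub w n)"
    using P_perp_props[OF rb h] by blast
  have pl2: "P_perp w n h \<in> l2" using pV by (simp add: orth_compl_def)
  have "h = (\<lambda>j. P_perp w n h j + Wz w n y j)"
  proof
    fix j
    have "h j - P_perp w n h j = Wz w n y j" using y by blast
    then show "h j = P_perp w n h j + Wz w n y j" by (simp add: diff_eq_eq add.commute)
  qed
  then have e: "l2_norm h = l2_norm (\<lambda>j. P_perp w n h j + Wz w n y j)" by (rule arg_cong)
  have "(l2_norm (\<lambda>j. P_perp w n h j + Wz w n y j))\<^sup>2 = (l2_norm (P_perp w n h))\<^sup>2 + (l2_norm (Wz w n y))\<^sup>2"
    by (rule pythag[OF pl2 Wz_l2[OF rb] orth_Wz(2)[OF rb pV]])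
  then have "(l2_norm h)\<^sup>2 = (l2_norm (P_perp w n h))\<^sup>2 + (l2_norm (Wz w n y))\<^sup>2"
    by (simp only: e)
  then have "(l2_norm (P_perp w n h))\<^sup>2 \<le> (l2_norm h)\<^sup>2" by simp
  then show ?thesis using norm_nonneg[OF h] by (rule power2_le_imp_le)
qed

definition ip :: "nat \<Rightarrow> (nat \<Rightarrow> complex) \<Rightarrow> (nat \<Rightarrow> complex) \<Rightarrow> complex" where
  "ip n x y = (\<Sum>i<n. x i * cnj (y i))"

definition cfun :: "(nat \<Rightarrow> nat \<Rightarrow> complex) \<Rightarrow> nat \<Rightarrow> nat \<Rightarrow> (nat \<Rightarrow> complex) \<Rightarrow> complex" where
  "cfun a n j z = (\<Sum>k<n. a j k * z k)"

definition orthn :: "nat \<Rightarrow> nat \<Rightarrow> (nat \<Rightarrow> nat \<Rightarrow> complex) \<Rightarrow> bool" where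
  "orthn n K Z \<longleftrightarrow> (\<forall>r<K. \<forall>r'<K. ip n (Z r) (Z r') = (if r = r' then 1 else 0))"

definition perpS :: "(nat \<Rightarrow> nat \<Rightarrow> complex) \<Rightarrow> nat \<Rightarrow> nat set \<Rightarrow> nat \<Rightarrow> (nat \<Rightarrow> nat \<Rightarrow> complex) \<Rightarrow> bool" where
  "perpS a n S K Z \<longleftrightarrow> (\<forall>r<K. \<forall>j\<in>S. cfun a n j (Z r) = 0)"

definition famOK :: "(nat \<Rightarrow> nat \<Rightarrow> complex) \<Rightarrow> nat \<Rightarrow> nat set \<Rightarrow> nat \<Rightarrow> bool" where
  "famOK a n S K \<longleftrightarrow> (\<exists>Z. orthn n K Z \<and> perpS a n S K Z)"

definition defic :: "(nat \<Rightarrow> nat \<Rightarrow> complex) \<Rightarrow> nat \<Rightarrow> nat set \<Rightarrow> nat" where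
  "defic a n S = (GREATEST K. famOK a n S K)"

lemma ip_cnj: "ip n y x = cnj (ip n x y)"
  unfolding ip_def by (simp add: ac_simps)

lemma ip_self: "ip n x x = complex_of_real (\<Sum>i<n. (cmod (x i))\<^sup>2)"
  unfolding ip_def by (simp add: mult_cnj_self)

lemma ip_sum_left: "ip n (\<lambda>i. \<Sum>r\<in>F. f r i) y = (\<Sum>r\<in>F. ip n (f r) y)"
  unfolding ip_def by (simp add: sum_distrib_right sum.swap[of _ F])

lemma ip_scale_left: "ip n (\<lambda>i. c * x i) y = c * ip n x y"
  unfolding ip_def by (simp add: sum_distrib_left mult.assoc)

lemma ip_lincomb_left: "ip n (\<lambda>i. \<Sum>r\<in>F. c r * f r i) y = (\<Sum>r\<in>F. c r * ip n (f r) y)"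
  by (simp add: ip_sum_left ip_scale_left)

lemma ip_diff_left: "ip n (\<lambda>i. x i - y i) z = ip n x z - ip n y z"
  unfolding ip_def by (simp add: left_diff_distrib sum_subtractf)

lemma ip_lincomb_right: "ip n y (\<lambda>i. \<Sum>r\<in>F. c r * f r i) = (\<Sum>r\<in>F. cnj (c r) * ip n y (f r))"
proof -
  have "ip n y (\<lambda>i. \<Sum>r\<in>F. c r * f r i) = cnj (ip n (\<lambda>i. \<Sum>r\<in>F. c r * f r i) y)" by (rule ip_cnj)
  also have "\<dots> = (\<Sum>r\<in>F. cnj (c r) * cnj (ip n (f r) y))" by (simp add: ip_lincomb_left)
  also have "\<dots> = (\<Sum>r\<in>F. cnj (c r) * ip n y (f r))" by (simp add: ip_cnj[of n y])
  finally show ?thesis .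
qed

lemma ip_diff_right: "ip n z (\<lambda>i. x i - y i) = ip n z x - ip n z y"
  using ip_diff_left[of n x y z] ip_cnj[of n z] by (metis complex_cnj_diff)

lemma ip_scale_right: "ip n x (\<lambda>i. c * y i) = cnj c * ip n x y"
  using ip_scale_left[of n c y x] ip_cnj[of n x] by (metis complex_cnj_mult)

lemma ip_cong: "(\<And>i. i < n \<Longrightarrow> x i = x' i) \<Longrightarrow> ip n x y = ip n x' y"
  unfolding ip_def by (rule sum.cong) auto

lemma cfun_cong: "(\<And>i. i < n \<Longrightarrow> x i = x' i) \<Longrightarrow> cfun a n j x = cfun a n j x'"
  unfolding cfun_def by (rule sum.cong) auto

lemma cfun_diff: "cfun a n j (\<lambda>i. x i - y i) = cfun a n j x - cfun a n j y"
  unfolding cfun_def by (simp add: right_diff_distrib sum_subtractf)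

lemma cfun_lincomb: "cfun a n j (\<lambda>i. \<Sum>r\<in>F. c r * f r i) = (\<Sum>r\<in>F. c r * cfun a n j (f r))"
  unfolding cfun_def by (simp add: sum_distrib_left sum.swap[of _ F] ac_simps)

lemma cfun_scale: "cfun a n j (\<lambda>i. c * x i) = c * cfun a n j x"
  unfolding cfun_def by (simp add: sum_distrib_left ac_simps)

lemma cfun_as_ip: "cfun a n j z = ip n z (\<lambda>k. cnj (a j k))"
  unfolding cfun_def ip_def by (simp add: ac_simps)

lemma bessel:
  assumes Z: "orthn n K Z"
  shows "(\<Sum>r<K. (cmod (ip n u (Z r)))\<^sup>2) \<le> (\<Sum>i<n. (cmod (u i))\<^sup>2)"
proof -
  define \<alpha> where "\<alpha> r = ip n u (Z r)" for r
  define v where "v = (\<lambda>i. u i - (\<Sum>r<K. \<alpha> r * Z r i))"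
  have Zv: "ip n (Z r) v = 0" if r: "r < K" for r
  proof -
    have "ip n (Z r) v = ip n (Z r) u - (\<Sum>r'<K. cnj (\<alpha> r') * ip n (Z r) (Z r'))"
      unfolding v_def by (simp add: ip_diff_right ip_lincomb_right)
    also have "(\<Sum>r'<K. cnj (\<alpha> r') * ip n (Z r) (Z r')) = (\<Sum>r'<K. if r' = r then cnj (\<alpha> r) else 0)"
      using Z r unfolding orthn_def by (intro sum.cong) auto
    also have "\<dots> = cnj (\<alpha> r)" using r by simp
    also have "ip n (Z r) u = cnj (\<alpha> r)" by (simp add: \<alpha>_def ip_cnj[of n "Z r"])
    finally show ?thesis by simp
  qed
  have "ip n v v = ip n u v - ip n (\<lambda>i. \<Sum>r<K. \<alpha> r * Z r i) v"
    by (simp add: v_def ip_diff_left)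
  also have "ip n (\<lambda>i. \<Sum>r<K. \<alpha> r * Z r i) v = 0"
    by (simp add: ip_lincomb_left Zv)
  also have "ip n u v = ip n u u - (\<Sum>r<K. cnj (\<alpha> r) * \<alpha> r)"
    by (simp add: v_def ip_diff_right ip_lincomb_right \<alpha>_def)
  finally have "ip n v v = ip n u u - (\<Sum>r<K. cnj (\<alpha> r) * \<alpha> r)" by simp
  moreover have "(\<Sum>r<K. cnj (\<alpha> r) * \<alpha> r) = complex_of_real (\<Sum>r<K. (cmod (\<alpha> r))\<^sup>2)"
    by (simp add: mult.commute mult_cnj_self)
  ultimately have "complex_of_real (\<Sum>i<n. (cmod (v i))\<^sup>2) =
      complex_of_real (\<Sum>i<n. (cmod (u i))\<^sup>2) - complex_of_real (\<Sum>r<K. (cmod (\<alpha> r))\<^sup>2)"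
    by (simp add: ip_self)
  then have "(\<Sum>i<n. (cmod (v i))\<^sup>2) = (\<Sum>i<n. (cmod (u i))\<^sup>2) - (\<Sum>r<K. (cmod (\<alpha> r))\<^sup>2)"
    by (metis of_real_diff of_real_eq_iff)
  moreover have "0 \<le> (\<Sum>i<n. (cmod (v i))\<^sup>2)" by (simp add: sum_nonneg)
  ultimately show ?thesis by (simp add: \<alpha>_def)
qed

lemma orthn_norm: "orthn n K Z \<Longrightarrow> r < K \<Longrightarrow> (\<Sum>i<n. (cmod (Z r i))\<^sup>2) = 1"
  unfolding orthn_def using ip_self[of n "Z r"] by (metis of_real_eq_1_iff)

lemma famOK_le_n:
  assumes "famOK a n S K"
  shows "K \<le> n"
proof -
  obtain Z where Z: "orthn n K Z" using assms famOK_def by blast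
  define e where "e i = (\<lambda>i'. if i' = i then (1::complex) else 0)" for i :: nat
  have "(\<Sum>r<K. (cmod (ip n (e i) (Z r)))\<^sup>2) \<le> 1" if i: "i < n" for i
  proof -
    have "(\<Sum>i'<n. (cmod (e i i'))\<^sup>2) = (\<Sum>i'<n. if i' = i then 1 else 0)"
      by (rule sum.cong) (auto simp: e_def)
    then have "(\<Sum>i'<n. (cmod (e i i'))\<^sup>2) = 1" using i by simp
    then show ?thesis using bessel[OF Z, of "e i"] by simp
  qed
  moreover have "ip n (e i) (Z r) = cnj (Z r i)" if "i < n" for i r
  proof -
    have "ip n (e i) (Z r) = (\<Sum>i'<n. if i' = i then cnj (Z r i) else 0)"
      unfolding ip_def by (rule sum.cong) (auto simp: e_def)
    then show ?thesis using that by simp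
  qed
  ultimately have le: "(\<Sum>r<K. (cmod (Z r i))\<^sup>2) \<le> 1" if "i < n" for i
    using that by simp
  have "real K = (\<Sum>r<K. (\<Sum>i<n. (cmod (Z r i))\<^sup>2))" using orthn_norm[OF Z] by simp
  also have "\<dots> = (\<Sum>i<n. (\<Sum>r<K. (cmod (Z r i))\<^sup>2))" by (rule sum.swap)
  also have "\<dots> \<le> (\<Sum>i<n. 1)" by (rule sum_mono) (rule le, simp)
  finally show ?thesis by simp
qed

lemma famOK_0: "famOK a n S 0"
  unfolding famOK_def orthn_def perpS_def by simp

lemma famOK_mono_K: "famOK a n S K \<Longrightarrow> K' \<le> K \<Longrightarrow> famOK a n S K'"
  unfolding famOK_def orthn_def perpS_def by (meson order_less_le_trans)

lemma famOK_mono_S: "famOK a n S' K \<Longrightarrow> S \<subseteq> S' \<Longrightarrow> famOK a n S K"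
  unfolding famOK_def perpS_def by blast

lemma defic_ok: "famOK a n S (defic a n S)"
  unfolding defic_def by (rule GreatestI_nat[where P="famOK a n S", OF famOK_0 famOK_le_n])

lemma defic_ge: "famOK a n S K \<Longrightarrow> K \<le> defic a n S"
  unfolding defic_def by (rule Greatest_le_nat[where P="famOK a n S", OF _ famOK_le_n])

lemma defic_le_n: "defic a n S \<le> n"
  by (rule famOK_le_n[OF defic_ok])

lemma defic_mono: "S \<subseteq> S' \<Longrightarrow> defic a n S' \<le> defic a n S"
  by (rule defic_ge, rule famOK_mono_S[OF defic_ok])

lemma complete_family:
  assumes Z: "orthn n K Z" and P: "perpS a n S K Z" and nx: "\<not> famOK a n S (Suc K)"
    and u: "\<forall>j\<in>S. cfun a n j u = 0"
  shows "\<forall>i<n. u i = (\<Sum>r<K. ip n u (Z r) * Z r i)"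
proof -
  define \<alpha> where "\<alpha> r = ip n u (Z r)" for r
  define v where "v = (\<lambda>i. u i - (\<Sum>r<K. \<alpha> r * Z r i))"
  have vperp: "cfun a n j v = 0" if "j \<in> S" for j
    using that u P unfolding v_def perpS_def by (simp add: cfun_diff cfun_lincomb)
  have vZ: "ip n v (Z r) = 0" if r: "r < K" for r
  proof -
    have "ip n v (Z r) = \<alpha> r - (\<Sum>r'<K. \<alpha> r' * ip n (Z r') (Z r))"
      unfolding v_def by (simp add: ip_diff_left ip_lincomb_left \<alpha>_def)
    also have "(\<Sum>r'<K. \<alpha> r' * ip n (Z r') (Z r)) = (\<Sum>r'<K. if r' = r then \<alpha> r else 0)"
      using Z r unfolding orthn_def by (intro sum.cong) auto
    also have "\<dots> = \<alpha> r" using r by simp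
    finally show ?thesis by simp
  qed
  define N where "N = (\<Sum>i<n. (cmod (v i))\<^sup>2)"
  have N0: "0 \<le> N" unfolding N_def by (simp add: sum_nonneg)
  have "N = 0"
  proof (rule ccontr)
    assume "N \<noteq> 0"
    then have Npos: "0 < N" using N0 by simp
    define \<sigma> where "\<sigma> = complex_of_real (sqrt N)"
    have \<sigma>0: "\<sigma> \<noteq> 0" using Npos by (simp add: \<sigma>_def)
    define Z' where "Z' = Z(K := (\<lambda>i. v i / \<sigma>))"
    have vn: "ip n (\<lambda>i. v i / \<sigma>) (\<lambda>i. v i / \<sigma>) = 1"
    proof -
      have "ip n (\<lambda>i. v i / \<sigma>) (\<lambda>i. v i / \<sigma>) = (1/\<sigma>) * cnj (1/\<sigma>) * ip n v v"
        using ip_scale_left[of n "1/\<sigma>" v] ip_scale_right[of n _ "1/\<sigma>" v]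
        by (simp add: divide_inverse ac_simps)
      also have "ip n v v = complex_of_real N" by (simp add: ip_self N_def)
      also have "(1/\<sigma>) * cnj (1/\<sigma>) = complex_of_real (1 / N)"
      proof -
        have c: "cnj \<sigma> = \<sigma>" by (simp add: \<sigma>_def)
        have s2: "\<sigma> * \<sigma> = complex_of_real N" using Npos by (simp add: \<sigma>_def flip: of_real_mult)
        have "(1/\<sigma>) * cnj (1/\<sigma>) = 1 / (\<sigma> * \<sigma>)" using c by simp
        then show ?thesis using s2 by simp
      qed
      finally show ?thesis using Npos by (simp flip: of_real_mult)
    qed
    have vZ': "ip n (\<lambda>i. v i / \<sigma>) (Z r) = 0" if "r < K" for r
      using ip_scale_left[of n "1/\<sigma>" v "Z r"] vZ[OF that] by (simp add: divide_inverse ac_simps)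
    have "orthn n (Suc K) Z'"
      unfolding orthn_def
    proof (intro allI impI)
      fix r r' assume r: "r < Suc K" and r': "r' < Suc K"
      show "ip n (Z' r) (Z' r') = (if r = r' then 1 else 0)"
      proof (cases "r = K")
        case True
        then show ?thesis
        proof (cases "r' = K")
          case True with \<open>r = K\<close> show ?thesis using vn by (simp add: Z'_def)
        next
          case False
          then have "r' < K" using r' by simp
          then show ?thesis using vZ' \<open>r = K\<close> False by (simp add: Z'_def)
        qed
      next
        case False
        then have rK: "r < K" using r by simp
        show ?thesis
        proof (cases "r' = K")
          case True
          have "ip n (Z r) (\<lambda>i. v i / \<sigma>) = cnj (ip n (\<lambda>i. v i / \<sigma>) (Z r))" by (rule ip_cnj)
          then show ?thesis using vZ'[OF rK] True False by (simp add: Z'_def)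
        next
          case False
          then have "r' < K" using r' by simp
          then show ?thesis using Z rK \<open>r \<noteq> K\<close> False unfolding orthn_def by (simp add: Z'_def)
        qed
      qed
    qed
    moreover have "perpS a n S (Suc K) Z'"
      unfolding perpS_def
    proof (intro allI impI ballI)
      fix r j assume r: "r < Suc K" and j: "j \<in> S"
      show "cfun a n j (Z' r) = 0"
      proof (cases "r = K")
        case True
        have "cfun a n j (\<lambda>i. (1/\<sigma>) * v i) = (1/\<sigma>) * cfun a n j v" by (rule cfun_scale)
        then show ?thesis using True vperp[OF j] by (simp add: Z'_def divide_inverse ac_simps)
      next
        case False
        then show ?thesis using P r j unfolding perpS_def by (simp add: Z'_def)
      qed
    qed
    ultimately have "famOK a n S (Suc K)" unfolding famOK_def by blast
    then show False using nx by simp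
  qed
  then have "\<forall>i<n. (cmod (v i))\<^sup>2 = 0"
    unfolding N_def using sum_nonneg_eq_0_iff[of "{..<n}" "\<lambda>i. (cmod (v i))\<^sup>2"] by simp
  then show ?thesis unfolding v_def \<alpha>_def by simp
qed

lemma defic_drop:
  assumes Z: "orthn n (defic a n S) Z" and P: "perpS a n S (defic a n S) Z"
    and j: "\<exists>r < defic a n S. cfun a n j (Z r) \<noteq> 0"
  shows "defic a n (insert j S) < defic a n S"
proof (rule ccontr)
  let ?K = "defic a n S"
  assume "\<not> defic a n (insert j S) < ?K"
  then have "famOK a n (insert j S) ?K"
    using famOK_mono_K[OF defic_ok[of a n "insert j S"]] by simp
  then obtain Y where Y: "orthn n ?K Y" "perpS a n (insert j S) ?K Y" unfolding famOK_def by blast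
  have YS: "perpS a n S ?K Y" using Y(2) unfolding perpS_def by blast
  have nx: "\<not> famOK a n S (Suc ?K)" using defic_ge[of a n S "Suc ?K"] by auto
  obtain r where r: "r < ?K" "cfun a n j (Z r) \<noteq> 0" using j by blast
  have "\<forall>j'\<in>S. cfun a n j' (Z r) = 0" using P r(1) unfolding perpS_def by blast
  then have eq: "\<forall>i<n. Z r i = (\<Sum>s<?K. ip n (Z r) (Y s) * Y s i)"
    by (rule complete_family[OF Y(1) YS nx])
  have "cfun a n j (Z r) = cfun a n j (\<lambda>i. \<Sum>s<?K. ip n (Z r) (Y s) * Y s i)"
    by (rule cfun_cong) (use eq in auto)
  also have "\<dots> = (\<Sum>s<?K. ip n (Z r) (Y s) * cfun a n j (Y s))" by (rule cfun_lincomb)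
  also have "\<dots> = 0" using Y(2) unfolding perpS_def by simp
  finally show False using r(2) by simp
qed

lemma defic_zero:
  assumes "defic a n S = 0" and z: "\<forall>j\<in>S. cfun a n j z = 0" and i: "i < n"
  shows "z i = 0"
proof (rule ccontr)
  assume zi: "z i \<noteq> 0"
  define N where "N = (\<Sum>i<n. (cmod (z i))\<^sup>2)"
  have "(cmod (z i))\<^sup>2 \<le> N" unfolding N_def using i
    by (intro member_le_sum) auto
  then have Npos: "0 < N" using zi by (smt (verit) zero_less_power2 zero_less_norm_iff)
  define \<sigma> where "\<sigma> = complex_of_real (sqrt N)"
  define Z where "Z = (\<lambda>(_::nat) i. z i / \<sigma>)"
  have "ip n (\<lambda>i. z i / \<sigma>) (\<lambda>i. z i / \<sigma>) = (1/\<sigma>) * cnj (1/\<sigma>) * ip n z z"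
    using ip_scale_left[of n "1/\<sigma>" z] ip_scale_right[of n _ "1/\<sigma>" z]
    by (simp add: divide_inverse ac_simps)
  also have "ip n z z = complex_of_real N" by (simp add: ip_self N_def)
  also have "(1/\<sigma>) * cnj (1/\<sigma>) = complex_of_real (1 / N)"
  proof -
    have c: "cnj \<sigma> = \<sigma>" by (simp add: \<sigma>_def)
    have s2: "\<sigma> * \<sigma> = complex_of_real N" using Npos by (simp add: \<sigma>_def flip: of_real_mult)
    have "(1/\<sigma>) * cnj (1/\<sigma>) = 1 / (\<sigma> * \<sigma>)" using c by simp
    then show ?thesis using s2 by simp
  qed
  finally have "ip n (\<lambda>i. z i / \<sigma>) (\<lambda>i. z i / \<sigma>) = 1" using Npos by (simp flip: of_real_mult)
  then have "orthn n 1 Z" unfolding orthn_def Z_def by simp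
  moreover have "perpS a n S 1 Z"
    unfolding perpS_def Z_def using z cfun_scale[of a n _ "1/\<sigma>" z] by (simp add: divide_inverse ac_simps)
  ultimately have "famOK a n S 1" unfolding famOK_def by blast
  then show False using defic_ge[of a n S 1] assms(1) by simp
qed

lemma pmf_embed:
  assumes pn: "\<And>j. 0 \<le> p j" and psum: "p sums 1"
  shows "pmf (embed_pmf p) j = (p j :: real)"
proof -
  have "(\<integral>\<^sup>+x. ennreal (p x) \<partial>count_space UNIV) = (\<Sum>x. ennreal (p x))"
    by (rule nn_integral_count_space_nat)
  also have "\<dots> = ennreal 1" by (rule suminf_ennreal_eq[OF pn psum])
  finally have "(\<integral>\<^sup>+x. ennreal (p x) \<partial>count_space UNIV) = 1" by simp
  then show ?thesis using pmf_embed_pmf[of p j] pn by blast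
qed

lemma step_bound:
  fixes a :: "nat \<Rightarrow> nat \<Rightarrow> complex" and p :: "nat \<Rightarrow> real"
  assumes H1: "\<And>z. summable (\<lambda>j. (cmod (cfun a n j z))\<^sup>2) \<and>
                   \<alpha> * (\<Sum>i<n. (cmod (z i))\<^sup>2) \<le> (\<Sum>j. (cmod (cfun a n j z))\<^sup>2)"
    and pdef: "\<And>j. p j = (\<Sum>k<n. (cmod (a j k))\<^sup>2) / T"
    and T: "0 < T" and psum: "p sums 1"
  shows "(\<integral>\<^sup>+j. ennreal (real (defic a n (insert j S))) \<partial>measure_pmf (embed_pmf p))
           \<le> ennreal ((1 - \<alpha> / T) * real (defic a n S))"
proof -
  have pn: "\<And>j. 0 \<le> p j" using pdef T by (simp add: sum_nonneg)
  have ps: "summable p" and p1: "suminf p = 1" using psum by (auto simp: sums_iff)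
  define K where "K = defic a n S"
  obtain Z where Z: "orthn n K Z" "perpS a n S K Z" using defic_ok[of a n S] unfolding famOK_def K_def by blast
  define E where "E = {j. \<exists>r<K. cfun a n j (Z r) \<noteq> 0}"
  define g where "g j = (if j \<in> E then real K - 1 else real K)" for j
  have Dg: "real (defic a n (insert j S)) \<le> g j" for j
  proof (cases "j \<in> E")
    case True
    then have "defic a n (insert j S) < K" using defic_drop[where a=a and n=n and S=S and Z=Z and j=j] Z unfolding K_def E_def by blast
    then show ?thesis using True by (simp add: g_def)
  next
    case False
    have "defic a n (insert j S) \<le> defic a n S" by (rule defic_mono) auto
    then show ?thesis using False by (simp add: g_def K_def)
  qed
  have g0: "0 \<le> g j" for j
  proof (cases "j \<in> E")
    case True
    then have "0 < K" unfolding E_def by auto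
    then show ?thesis using True by (simp add: g_def)
  qed (simp add: g_def)
  define q where "q j = (if j \<in> E then p j else 0)" for j
  have qs: "summable q"
    by (rule summable_comparison_test[OF _ ps]) (auto simp: q_def pn)
  have pg: "p j * g j = real K * p j - q j" for j
    by (simp add: g_def q_def algebra_simps)
  have pgs: "summable (\<lambda>j. p j * g j)" unfolding pg by (intro summable_diff summable_mult qs ps)
  have sum_pg: "(\<Sum>j. p j * g j) = real K - (\<Sum>j. q j)"
  proof -
    have "(\<Sum>j. real K * p j - q j) = (\<Sum>j. real K * p j) - (\<Sum>j. q j)"
      by (rule suminf_diff[OF summable_mult[OF ps] qs, symmetric])
    also have "(\<Sum>j. real K * p j) = real K * suminf p" by (rule suminf_mult[OF ps])
    finally show ?thesis unfolding pg using p1 by simp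
  qed
  define c2 where "c2 j = (\<Sum>r<K. (cmod (cfun a n j (Z r)))\<^sup>2)" for j
  have c2s: "summable c2" unfolding c2_def using H1 by (intro summable_sum) blast
  have qc: "c2 j / T \<le> q j" for j
  proof (cases "j \<in> E")
    case True
    have "c2 j = (\<Sum>r<K. (cmod (ip n (\<lambda>k. cnj (a j k)) (Z r)))\<^sup>2)"
      unfolding c2_def cfun_as_ip by (rule sum.cong) (auto simp: ip_cnj[of n "Z _"])
    also have "\<dots> \<le> (\<Sum>k<n. (cmod (cnj (a j k)))\<^sup>2)" by (rule bessel[OF Z(1)])
    also have "\<dots> = p j * T" using pdef[of j] T by simp
    finally show ?thesis using True T by (simp add: q_def pos_divide_le_eq)
  next
    case False
    then have "c2 j = 0" unfolding c2_def E_def by simp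
    then show ?thesis using False by (simp add: q_def)
  qed
  have "(\<Sum>j. c2 j) = (\<Sum>r<K. \<Sum>j. (cmod (cfun a n j (Z r)))\<^sup>2)"
    unfolding c2_def by (rule suminf_sum) (use H1 in blast)
  also have "\<dots> \<ge> (\<Sum>r<K. \<alpha>)"
  proof (rule sum_mono)
    fix r assume "r \<in> {..<K}"
    then have "(\<Sum>i<n. (cmod (Z r i))\<^sup>2) = 1" using orthn_norm[OF Z(1)] by simp
    then show "\<alpha> \<le> (\<Sum>j. (cmod (cfun a n j (Z r)))\<^sup>2)" using H1[of "Z r"] by simp
  qed
  finally have c2ge: "real K * \<alpha> \<le> (\<Sum>j. c2 j)" by simp
  have "(\<Sum>j. c2 j / T) \<le> (\<Sum>j. q j)"
    by (rule suminf_le[OF qc summable_divide[OF c2s] qs])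
  moreover have "(\<Sum>j. c2 j / T) = (\<Sum>j. c2 j) / T" by (rule suminf_divide[OF c2s])
  moreover have "real K * \<alpha> / T \<le> (\<Sum>j. c2 j) / T" using c2ge T by (simp add: divide_right_mono)
  ultimately have "real K * \<alpha> / T \<le> (\<Sum>j. q j)" by linarith
  then have main: "(\<Sum>j. p j * g j) \<le> (1 - \<alpha> / T) * real K"
    unfolding sum_pg by (simp add: algebra_simps)
  have "(\<integral>\<^sup>+j. ennreal (real (defic a n (insert j S))) \<partial>measure_pmf (embed_pmf p))
      = (\<integral>\<^sup>+j. ennreal (p j) * ennreal (real (defic a n (insert j S))) \<partial>count_space UNIV)"
    by (simp add: nn_integral_measure_pmf pmf_embed[OF pn psum])
  also have "\<dots> \<le> (\<integral>\<^sup>+j. ennreal (p j * g j) \<partial>count_space UNIV)"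
  proof (rule nn_integral_mono)
    fix j
    have "ennreal (p j) * ennreal (real (defic a n (insert j S))) = ennreal (p j * real (defic a n (insert j S)))"
      using pn by (simp add: ennreal_mult)
    also have "\<dots> \<le> ennreal (p j * g j)" using Dg[of j] pn[of j] by (intro ennreal_leI mult_left_mono) auto
    finally show "ennreal (p j) * ennreal (real (defic a n (insert j S))) \<le> ennreal (p j * g j)" .
  qed
  also have "\<dots> = (\<Sum>j. ennreal (p j * g j))" by (rule nn_integral_count_space_nat)
  also have "\<dots> = ennreal (\<Sum>j. p j * g j)" using pn g0 pgs by (intro suminf_ennreal2) auto
  also have "\<dots> \<le> ennreal ((1 - \<alpha> / T) * real (defic a n S))" using main by (simp add: K_def ennreal_leI)
  finally show ?thesis .
qed

lemma image_upd_lessThan: "(f(m := y)) ` {..<Suc m} = insert y (f ` {..<m})"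
  by (auto simp: lessThan_Suc)

lemma defic_expect:
  fixes a :: "nat \<Rightarrow> nat \<Rightarrow> complex" and p :: "nat \<Rightarrow> real" and m :: nat
  assumes H1: "\<And>z. summable (\<lambda>j. (cmod (cfun a n j z))\<^sup>2) \<and>
                   \<alpha> * (\<Sum>i<n. (cmod (z i))\<^sup>2) \<le> (\<Sum>j. (cmod (cfun a n j z))\<^sup>2)"
    and pdef: "\<And>j. p j = (\<Sum>k<n. (cmod (a j k))\<^sup>2) / T"
    and T: "0 < T" and psum: "p sums 1" and aT: "\<alpha> \<le> T"
  shows "(\<integral>\<^sup>+\<omega>. ennreal (real (defic a n (\<omega> ` {..<m}))) \<partial>measure_pmf (Pi_pmf {..<m} 0 (\<lambda>_. embed_pmf p)))
           \<le> ennreal (real n * (1 - \<alpha> / T) ^ m)"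
proof (induction m)
  case 0
  have "(\<integral>\<^sup>+\<omega>. ennreal (real (defic a n (\<omega> ` {..<(0::nat)}))) \<partial>measure_pmf (Pi_pmf {..<(0::nat)} 0 (\<lambda>_. embed_pmf p)))
      = ennreal (real (defic a n {}))"
    by (simp only: lessThan_0 image_empty pmf_Pi_empty) (subst nn_integral_return_pmf, auto)
  also have "\<dots> \<le> ennreal (real n)" using defic_le_n[of a n "{}"] by (simp add: ennreal_leI)
  finally show ?case by simp
next
  case (Suc m)
  let ?P = "\<lambda>_::nat. embed_pmf p"
  let ?D = "\<lambda>\<omega>. ennreal (real (defic a n (\<omega> ` {..<Suc m})))"
  let ?q = "1 - \<alpha> / T"
  have aux: "{..<Suc m} \<inter> {x. x \<noteq> m} = {..<m}" by auto
  have q0: "0 \<le> ?q" using aT T by simp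
  have "Pi_pmf {..<Suc m} 0 ?P = do {y \<leftarrow> ?P m; f \<leftarrow> Pi_pmf {..<m} 0 ?P; return_pmf (f(m := y))}"
    unfolding lessThan_Suc by (rule Pi_pmf_insert') auto
  also have "\<dots> = do {f \<leftarrow> Pi_pmf {..<m} 0 ?P; y \<leftarrow> ?P m; return_pmf (f(m := y))}"
    by (rule bind_commute_pmf)
  finally have eq: "Pi_pmf {..<Suc m} 0 ?P = do {f \<leftarrow> Pi_pmf {..<m} 0 ?P; y \<leftarrow> ?P m; return_pmf (f(m := y))}" .
  have "(\<integral>\<^sup>+\<omega>. ?D \<omega> \<partial>measure_pmf (Pi_pmf {..<Suc m} 0 ?P))
      = (\<integral>\<^sup>+f. \<integral>\<^sup>+y. ennreal (real (defic a n (insert y (f ` {..<m})))) \<partial>measure_pmf (embed_pmf p) \<partial>measure_pmf (Pi_pmf {..<m} 0 ?P))"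
    unfolding eq by (simp add: nn_integral_bind_pmf nn_integral_return_pmf image_upd_lessThan aux)
  also have "\<dots> \<le> (\<integral>\<^sup>+f. ennreal ?q * ennreal (real (defic a n (f ` {..<m}))) \<partial>measure_pmf (Pi_pmf {..<m} 0 ?P))"
  proof (rule nn_integral_mono)
    fix f
    show "(\<integral>\<^sup>+y. ennreal (real (defic a n (insert y (f ` {..<m})))) \<partial>measure_pmf (embed_pmf p))
          \<le> ennreal ?q * ennreal (real (defic a n (f ` {..<m})))"
      using step_bound[OF H1 pdef T psum, of "f ` {..<m}"] q0 by (simp add: ennreal_mult)
  qed
  also have "\<dots> = ennreal ?q * (\<integral>\<^sup>+f. ennreal (real (defic a n (f ` {..<m}))) \<partial>measure_pmf (Pi_pmf {..<m} 0 ?P))"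
    by (rule nn_integral_cmult) simp
  also have "\<dots> \<le> ennreal ?q * ennreal (real n * ?q ^ m)"
    by (rule mult_left_mono[OF Suc.IH]) simp
  also have "\<dots> = ennreal (real n * ?q ^ Suc m)" using q0 by (simp add: ennreal_mult[symmetric] ac_simps)
  finally show ?case .
qed

lemma prob_nondeg:
  fixes a :: "nat \<Rightarrow> nat \<Rightarrow> complex" and p :: "nat \<Rightarrow> real" and m :: nat
  assumes H1: "\<And>z. summable (\<lambda>j. (cmod (cfun a n j z))\<^sup>2) \<and>
                   \<alpha> * (\<Sum>i<n. (cmod (z i))\<^sup>2) \<le> (\<Sum>j. (cmod (cfun a n j z))\<^sup>2)"
    and pdef: "\<And>j. p j = (\<Sum>k<n. (cmod (a j k))\<^sup>2) / T"
    and T: "0 < T" and psum: "p sums 1" and aT: "\<alpha> \<le> T"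
  shows "1 - real n * (1 - \<alpha> / T) ^ m \<le>
           measure_pmf.prob (Pi_pmf {..<m} 0 (\<lambda>_. embed_pmf p)) {\<omega>. defic a n (\<omega> ` {..<m}) = 0}"
proof -
  let ?M = "Pi_pmf {..<m} 0 (\<lambda>_. embed_pmf p)"
  let ?A = "{\<omega>. defic a n (\<omega> ` {..<m}) \<noteq> 0}"
  have q0: "0 \<le> real n * (1 - \<alpha> / T) ^ m" using aT T by simp
  have "emeasure (measure_pmf ?M) ?A = (\<integral>\<^sup>+\<omega>. indicator ?A \<omega> \<partial>measure_pmf ?M)"
    by (simp add: nn_integral_indicator)
  also have "\<dots> \<le> (\<integral>\<^sup>+\<omega>. ennreal (real (defic a n (\<omega> ` {..<m}))) \<partial>measure_pmf ?M)"
    by (rule nn_integral_mono) (auto simp: indicator_def)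
  also have "\<dots> \<le> ennreal (real n * (1 - \<alpha> / T) ^ m)" by (rule defic_expect[OF H1 pdef T psum aT])
  finally have "measure_pmf.prob ?M ?A \<le> real n * (1 - \<alpha> / T) ^ m"
    using q0 by (simp add: measure_pmf.emeasure_eq_measure ennreal_le_iff)
  moreover have "measure_pmf.prob ?M (UNIV - ?A) = 1 - measure_pmf.prob ?M ?A"
    using measure_pmf.prob_compl[of ?A ?M] by simp
  moreover have "UNIV - ?A = {\<omega>. defic a n (\<omega> ` {..<m}) = 0}" by auto
  ultimately show ?thesis by simp
qed

definition amat :: "(nat \<Rightarrow> seq) \<Rightarrow> (nat \<Rightarrow> seq) \<Rightarrow> nat \<Rightarrow> nat \<Rightarrow> complex" where
  "amat s w j k = l2_inner (w k) (s j)"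

lemma suminf_single: "(\<Sum>i. if i = j then f i else (0::complex)) = f j"
proof -
  have "(\<Sum>i. if i = j then f i else (0::complex)) = (\<Sum>i\<in>{j}. if i = j then f i else 0)"
    by (rule suminf_finite) auto
  then show ?thesis by simp
qed

lemma W_iota_Wz: "W_iota w n x = Wz w n (\<lambda>k. x $ k)"
  by (simp add: W_iota_def Wz_def)

lemma W_iota_unit:
  assumes "k < n"
  shows "W_iota w n (unit_vec n k) = w k"
proof
  fix j
  have "W_iota w n (unit_vec n k) j = (\<Sum>l<n. if l = k then w k j else 0)"
    unfolding W_iota_def using assms by (intro sum.cong) auto
  also have "\<dots> = w k j" using assms by simp
  finally show "W_iota w n (unit_vec n k) j = w k j" .
qed

lemma exp_bound:
  fixes x L :: real and m n :: nat
  assumes x: "0 < x" "x \<le> 1" and L: "ln (2 * real n / \<delta>) \<le> x * real m" and n: "1 \<le> n" and d: "0 < \<delta>"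
  shows "real n * (1 - x) ^ m \<le> \<delta>"
proof -
  have "1 - x \<le> exp (- x)" using exp_ge_add_one_self[of "-x"] by simp
  then have "(1 - x) ^ m \<le> exp (- x) ^ m" using x by (intro power_mono) auto
  also have "\<dots> = exp (- (x * real m))" by (simp add: exp_of_nat_mult[symmetric] ac_simps)
  also have "\<dots> \<le> exp (- ln (2 * real n / \<delta>))" using L by simp
  also have "\<dots> = \<delta> / (2 * real n)" using n d by (simp add: exp_minus ln_div exp_diff)
  finally have "real n * (1 - x) ^ m \<le> real n * (\<delta> / (2 * real n))"
    using n by (intro mult_left_mono) auto
  also have "\<dots> = \<delta> / 2" using n by simp
  finally show ?thesis using d by simp
qed

context
  fixes s w :: "nat \<Rightarrow> seq" and A B C D :: real
  assumes fr: "is_frame s A B" and rb: "is_riesz_basis w C D" and inc: "closed_span w \<subseteq> closed_span s"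
begin

lemma sw_cnj: "l2_inner (s j) (w k) = cnj (amat s w j k)"
  unfolding amat_def by (rule inner_cnj[OF riesz_l2[OF rb] frame_l2[OF fr], symmetric])

lemma v_vec_idx:
  assumes "k < n"
  shows "v_vec s w n j $ k = cnj (amat s w j k)"
proof -
  have "v_vec s w n j $ k = (\<Sum>i. e_seq j i * l2_inner (s i) (w k))"
    using assms by (simp add: v_vec_def iota_U_adj_def)
  also have "\<dots> = (\<Sum>i. if i = j then l2_inner (s i) (w k) else 0)"
    by (rule suminf_cong) (simp add: e_seq_def)
  also have "\<dots> = l2_inner (s j) (w k)" by (rule suminf_single)
  finally show ?thesis by (simp add: sw_cnj)
qed

lemma cvec_norm_v: "(cvec_norm (v_vec s w n j))\<^sup>2 = (\<Sum>k<n. (cmod (amat s w j k))\<^sup>2)"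
proof -
  have d: "dim_vec (v_vec s w n j) = n" by (simp add: v_vec_def iota_U_adj_def)
  have "(\<Sum>k<n. (cmod (v_vec s w n j $ k))\<^sup>2) = (\<Sum>k<n. (cmod (amat s w j k))\<^sup>2)"
    by (rule sum.cong) (auto simp: v_vec_idx)
  moreover have "0 \<le> (\<Sum>k<n. (cmod (v_vec s w n j $ k))\<^sup>2)" by (simp add: sum_nonneg)
  ultimately show ?thesis unfolding cvec_norm_def d by simp
qed

lemma U_iota_unit:
  assumes "l < n"
  shows "U_iota s w n (unit_vec n l) j = amat s w j l"
  using assms by (simp add: U_iota_def analysis_op_def W_iota_unit amat_def)

lemma Sigma_diag:
  assumes "k < n"
  shows "Sigma_mat s w n $$ (k,k) = complex_of_real (\<Sum>j. (cmod (amat s w j k))\<^sup>2)"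
proof -
  have "Sigma_mat s w n $$ (k,k) = (\<Sum>j. U_iota s w n (unit_vec n k) j * l2_inner (s j) (w k))"
    using assms by (simp add: Sigma_mat_def iota_U_adj_def)
  also have "\<dots> = (\<Sum>j. complex_of_real ((cmod (amat s w j k))\<^sup>2))"
    by (rule suminf_cong) (simp add: U_iota_unit[OF assms] sw_cnj mult_cnj_self)
  also have "\<dots> = complex_of_real (\<Sum>j. (cmod (amat s w j k))\<^sup>2)"
    using wk_bounds[OF fr rb inc, of k] by (simp add: suminf_of_real amat_def)
  finally show ?thesis .
qed

lemma trace_eq: "Re (mat_trace (Sigma_mat s w n)) = (\<Sum>k<n. \<Sum>j. (cmod (amat s w j k))\<^sup>2)"
proof -
  have "mat_trace (Sigma_mat s w n) = (\<Sum>k<n. Sigma_mat s w n $$ (k,k))"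
    by (simp add: mat_trace_def Sigma_mat_def)
  also have "\<dots> = (\<Sum>k<n. complex_of_real (\<Sum>j. (cmod (amat s w j k))\<^sup>2))"
    by (rule sum.cong) (auto simp: Sigma_diag)
  finally show ?thesis by simp
qed

lemma trace_bounds: "real n * (A * C) \<le> Re (mat_trace (Sigma_mat s w n)) \<and> Re (mat_trace (Sigma_mat s w n)) \<le> real n * (B * D)"
proof -
  have "(\<Sum>k<n. A * C) \<le> (\<Sum>k<n. \<Sum>j. (cmod (amat s w j k))\<^sup>2)"
    by (rule sum_mono) (use wk_bounds[OF fr rb inc] in \<open>simp add: amat_def\<close>)
  moreover have "(\<Sum>k<n. \<Sum>j. (cmod (amat s w j k))\<^sup>2) \<le> (\<Sum>k<n. B * D)"
    by (rule sum_mono) (use wk_bounds[OF fr rb inc] in \<open>simp add: amat_def\<close>)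
  ultimately show ?thesis unfolding trace_eq by simp
qed

lemma ACpos: "0 < A * C"
  using fr rb by (simp add: is_frame_def is_riesz_basis_def)

lemma trace_pos: "1 \<le> n \<Longrightarrow> A * C \<le> Re (mat_trace (Sigma_mat s w n))"
proof -
  assume n: "1 \<le> n"
  have "A * C \<le> real n * (A * C)" using ACpos n by (simp add: mult_le_cancel_right1)
  then show ?thesis using trace_bounds[of n] by linarith
qed

lemma leverage_eq: "leverage s w n j = (\<Sum>k<n. (cmod (amat s w j k))\<^sup>2) / Re (mat_trace (Sigma_mat s w n))"
  by (simp add: leverage_def cvec_norm_v)

lemma lev_sums:
  assumes n: "1 \<le> n"
  shows "leverage s w n sums 1"
proof -
  let ?T = "Re (mat_trace (Sigma_mat s w n))"
  have T: "0 < ?T" using trace_pos[OF n] ACpos by linarith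
  have sk: "\<And>k. summable (\<lambda>j. (cmod (amat s w j k))\<^sup>2)" using wk_bounds[OF fr rb inc] by (simp add: amat_def)
  have "summable (\<lambda>j. \<Sum>k<n. (cmod (amat s w j k))\<^sup>2)" by (intro summable_sum sk)
  moreover have "(\<Sum>j. \<Sum>k<n. (cmod (amat s w j k))\<^sup>2) = ?T"
    unfolding trace_eq by (rule suminf_sum) (rule sk)
  ultimately have "(\<lambda>j. \<Sum>k<n. (cmod (amat s w j k))\<^sup>2) sums ?T" by (simp add: sums_iff)
  then have "(\<lambda>j. (\<Sum>k<n. (cmod (amat s w j k))\<^sup>2) / ?T) sums (?T / ?T)" by (rule sums_divide)
  moreover have "leverage s w n = (\<lambda>j. (\<Sum>k<n. (cmod (amat s w j k))\<^sup>2) / ?T)"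
    by (rule ext) (simp add: leverage_eq)
  ultimately show ?thesis using T by simp
qed

lemma H1: "summable (\<lambda>j. (cmod (cfun (amat s w) n j z))\<^sup>2) \<and>
           A * C * (\<Sum>i<n. (cmod (z i))\<^sup>2) \<le> (\<Sum>j. (cmod (cfun (amat s w) n j z))\<^sup>2)"
proof -
  have "\<And>j. cfun (amat s w) n j z = (\<Sum>k<n. z k * l2_inner (w k) (s j))"
    unfolding cfun_def amat_def by (simp add: ac_simps)
  then show ?thesis using lower_key[OF fr rb inc, where n=n and z=z] by (simp add: nsq_def)
qed

lemma prob_concrete:
  assumes n: "1 \<le> n"
  shows "1 - real n * (1 - A * C / Re (mat_trace (Sigma_mat s w n))) ^ m \<le>
     measure_pmf.prob (sample_pmf (leverage s w n) m) {\<omega>. defic (amat s w) n (\<omega> ` {..<m}) = 0}"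
proof -
  have T: "0 < Re (mat_trace (Sigma_mat s w n))" using trace_pos[OF n] ACpos by linarith
  show ?thesis unfolding sample_pmf_def
    by (rule prob_nondeg[OF H1 leverage_eq T lev_sums[OF n] trace_pos[OF n]])
qed

lemma lev_nonneg: "1 \<le> n \<Longrightarrow> 0 \<le> leverage s w n j"
  using trace_pos[of n] ACpos by (simp add: leverage_eq sum_nonneg)

lemma lev_zero:
  assumes n: "1 \<le> n" and p0: "leverage s w n j = 0" and k: "k < n"
  shows "amat s w j k = 0"
proof -
  have T: "0 < Re (mat_trace (Sigma_mat s w n))" using trace_pos[OF n] ACpos by linarith
  have "(\<Sum>k<n. (cmod (amat s w j k))\<^sup>2) = 0" using p0 T by (simp add: leverage_eq)
  then have "(cmod (amat s w j k))\<^sup>2 = 0"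
    using sum_nonneg_eq_0_iff[of "{..<n}" "\<lambda>k. (cmod (amat s w j k))\<^sup>2"] k by simp
  then show ?thesis by simp
qed

end

lemma cmod_add_sq: "(cmod (e + c))\<^sup>2 = (cmod e)\<^sup>2 + (cmod c)\<^sup>2 + 2 * Re (e * cnj c)"
  unfolding cmod_power2 by (simp add: power2_eq_square algebra_simps)

lemma cfun_add: "cfun a n j (\<lambda>i. x i + y i) = cfun a n j x + cfun a n j y"
  unfolding cfun_def by (simp add: distrib_left sum.distrib)

lemma norm_scale:
  assumes "x \<in> l2"
  shows "l2_norm (\<lambda>j. c * x j) = cmod c * l2_norm x"
proof -
  have "(\<Sum>j. (cmod (c * x j))\<^sup>2) = (cmod c)\<^sup>2 * (\<Sum>j. (cmod (x j))\<^sup>2)"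
    using assms by (simp add: l2_def norm_mult power_mult_distrib suminf_mult)
  then show ?thesis by (simp add: l2_norm_def real_sqrt_mult)
qed

lemma norm_uminus: "l2_norm (\<lambda>j. - x j) = l2_norm x"
  by (simp add: l2_norm_def)

lemma mat_inv_props:
  assumes M: "M \<in> carrier_mat n n" and inv: "invertible_mat M"
  shows "mat_inv M \<in> carrier_mat n n \<and> M * mat_inv M = 1\<^sub>m n"
proof -
  have "\<exists>N. inverts_mat M N \<and> inverts_mat N M" using inv by (simp add: invertible_mat_def)
  then have N: "inverts_mat M (mat_inv M) \<and> inverts_mat (mat_inv M) M"
    unfolding mat_inv_def by (rule someI_ex)
  let ?N = "mat_inv M"
  have 1: "M * ?N = 1\<^sub>m n" using N M by (simp add: inverts_mat_def)
  have 2: "?N * M = 1\<^sub>m (dim_row ?N)" using N by (simp add: inverts_mat_def)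
  have "dim_col ?N = n" using arg_cong[OF 1, of dim_col] by simp
  moreover have "dim_row ?N = n" using arg_cong[OF 2, of dim_col] M by simp
  ultimately show ?thesis using 1 by auto
qed

locale dset =
  fixes s w :: "nat \<Rightarrow> seq" and A B C D :: real and p :: "nat \<Rightarrow> real" and m n :: nat and \<omega> :: "nat \<Rightarrow> nat"
  assumes fr: "is_frame s A B" and rb: "is_riesz_basis w C D" and inc: "closed_span w \<subseteq> closed_span s"
    and m: "0 < m" and pn: "\<And>j. 0 \<le> p j" and pz: "\<And>j k. p j = 0 \<Longrightarrow> k < n \<Longrightarrow> amat s w j k = 0"
begin

abbreviation "wt t \<equiv> complex_of_real (p (\<omega> t))"
abbreviation "aa \<equiv> amat s w"
abbreviation "SH \<equiv> Sigma_hat s w n p m \<omega>"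

lemma Q_sum: "(\<Sum>j. Q_op p m \<omega> y j * g j) = (1 / of_nat m) * (\<Sum>t<m. y (\<omega> t) / wt t * g (\<omega> t))"
proof -
  let ?I = "\<omega> ` {..<m}"
  have "(\<Sum>j. Q_op p m \<omega> y j * g j) = (\<Sum>j\<in>?I. Q_op p m \<omega> y j * g j)"
  proof (rule suminf_finite)
    show "finite ?I" by simp
    fix j assume j: "j \<notin> ?I"
    have "Q_op p m \<omega> y j = 0" unfolding Q_op_def using j by (force intro!: sum.neutral)
    then show "Q_op p m \<omega> y j * g j = 0" by simp
  qed
  also have "\<dots> = (\<Sum>j\<in>?I. (1 / of_nat m) * (\<Sum>t<m. if \<omega> t = j then y j / complex_of_real (p j) * g j else 0))"
  proof (rule sum.cong[OF refl])
    fix j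
    have "Q_op p m \<omega> y j * g j = (1 / of_nat m) * (\<Sum>t<m. (if \<omega> t = j then y j / complex_of_real (p j) else 0) * g j)"
      unfolding Q_op_def by (simp add: sum_distrib_right mult.assoc)
    also have "(\<Sum>t<m. (if \<omega> t = j then y j / complex_of_real (p j) else 0) * g j)
        = (\<Sum>t<m. if \<omega> t = j then y j / complex_of_real (p j) * g j else 0)"
      by (rule sum.cong) auto
    finally show "Q_op p m \<omega> y j * g j = (1 / of_nat m) * (\<Sum>t<m. if \<omega> t = j then y j / complex_of_real (p j) * g j else 0)" .
  qed
  also have "\<dots> = (1 / of_nat m) * (\<Sum>j\<in>?I. \<Sum>t<m. if \<omega> t = j then y j / complex_of_real (p j) * g j else 0)"
    by (simp add: sum_distrib_left)
  also have "(\<Sum>j\<in>?I. \<Sum>t<m. if \<omega> t = j then y j / complex_of_real (p j) * g j else 0)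
      = (\<Sum>t<m. \<Sum>j\<in>?I. if \<omega> t = j then y j / complex_of_real (p j) * g j else 0)"
    by (rule sum.swap)
  also have "\<dots> = (\<Sum>t<m. y (\<omega> t) / wt t * g (\<omega> t))"
    by (rule sum.cong[OF refl]) (simp add: sum.delta)
  finally show ?thesis .
qed

lemma IU_idx:
  assumes k: "k < n"
  shows "iota_U_adj s w n (Q_op p m \<omega> y) $ k = (1 / of_nat m) * (\<Sum>t<m. y (\<omega> t) / wt t * cnj (aa (\<omega> t) k))"
proof -
  have "iota_U_adj s w n (Q_op p m \<omega> y) $ k = (\<Sum>j. Q_op p m \<omega> y j * l2_inner (s j) (w k))"
    using k by (simp add: iota_U_adj_def)
  also have "\<dots> = (1 / of_nat m) * (\<Sum>t<m. y (\<omega> t) / wt t * l2_inner (s (\<omega> t)) (w k))"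
    by (rule Q_sum)
  finally show ?thesis by (simp add: sw_cnj[OF fr rb inc])
qed

lemma SH_carrier: "SH \<in> carrier_mat n n"
  by (simp add: Sigma_hat_def)

lemma SH_idx:
  assumes k: "k < n" and l: "l < n"
  shows "SH $$ (k,l) = (1 / of_nat m) * (\<Sum>t<m. aa (\<omega> t) l / wt t * cnj (aa (\<omega> t) k))"
  using k l by (simp add: Sigma_hat_def IU_idx U_iota_unit[OF fr rb inc])

lemma GH_dim: "Gamma_hat s w n p m \<omega> h \<in> carrier_vec n"
  by (simp add: Gamma_hat_def iota_U_adj_def)

lemma GH_idx:
  assumes k: "k < n"
  shows "Gamma_hat s w n p m \<omega> h $ k =
     (1 / of_nat m) * (\<Sum>t<m. l2_inner (P_perp w n h) (s (\<omega> t)) / wt t * cnj (aa (\<omega> t) k))"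
  using k by (simp add: Gamma_hat_def IU_idx analysis_op_def)

abbreviation "cc t x \<equiv> cfun aa n (\<omega> t) (\<lambda>l. x $ l)"

lemma SHx_idx:
  assumes x: "x \<in> carrier_vec n" and k: "k < n"
  shows "(SH *\<^sub>v x) $ k = (1 / of_nat m) * (\<Sum>t<m. cc t x / wt t * cnj (aa (\<omega> t) k))"
proof -
  have "(SH *\<^sub>v x) $ k = (\<Sum>l<n. SH $$ (k,l) * x $ l)" by (rule matvec_idx[OF SH_carrier x k])
  also have "\<dots> = (\<Sum>l<n. (1 / of_nat m) * (\<Sum>t<m. aa (\<omega> t) l / wt t * cnj (aa (\<omega> t) k)) * x $ l)"
    by (rule sum.cong[OF refl]) (simp add: SH_idx k)
  also have "\<dots> = (1 / of_nat m) * (\<Sum>l<n. \<Sum>t<m. aa (\<omega> t) l * x $ l / wt t * cnj (aa (\<omega> t) k))"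
    by (simp add: sum_distrib_left sum_distrib_right ac_simps)
  also have "(\<Sum>l<n. \<Sum>t<m. aa (\<omega> t) l * x $ l / wt t * cnj (aa (\<omega> t) k))
      = (\<Sum>t<m. \<Sum>l<n. aa (\<omega> t) l * x $ l / wt t * cnj (aa (\<omega> t) k))" by (rule sum.swap)
  also have "\<dots> = (\<Sum>t<m. cc t x / wt t * cnj (aa (\<omega> t) k))"
    unfolding cfun_def by (simp add: sum_distrib_right sum_divide_distrib)
  finally show ?thesis .
qed

lemma quad:
  assumes x: "x \<in> carrier_vec n"
  shows "(\<Sum>k<n. cnj (x $ k) * (SH *\<^sub>v x) $ k) = (1 / of_nat m) * complex_of_real (\<Sum>t<m. (cmod (cc t x))\<^sup>2 / p (\<omega> t))"
proof -
  have "(\<Sum>k<n. cnj (x $ k) * (SH *\<^sub>v x) $ k)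
      = (\<Sum>k<n. cnj (x $ k) * ((1 / of_nat m) * (\<Sum>t<m. cc t x / wt t * cnj (aa (\<omega> t) k))))"
    by (rule sum.cong[OF refl]) (simp add: SHx_idx[OF x])
  also have "\<dots> = (1 / of_nat m) * (\<Sum>k<n. \<Sum>t<m. cc t x / wt t * cnj (aa (\<omega> t) k * x $ k))"
    by (simp add: sum_distrib_left ac_simps)
  also have "(\<Sum>k<n. \<Sum>t<m. cc t x / wt t * cnj (aa (\<omega> t) k * x $ k))
      = (\<Sum>t<m. \<Sum>k<n. cc t x / wt t * cnj (aa (\<omega> t) k * x $ k))" by (rule sum.swap)
  also have "\<dots> = (\<Sum>t<m. cc t x / wt t * cnj (cc t x))"
    unfolding cfun_def by (simp add: sum_distrib_left)
  also have "\<dots> = (\<Sum>t<m. complex_of_real ((cmod (cc t x))\<^sup>2 / p (\<omega> t)))"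
  proof (rule sum.cong[OF refl])
    fix t
    have "cc t x / wt t * cnj (cc t x) = (cc t x * cnj (cc t x)) / wt t" by simp
    also have "\<dots> = complex_of_real ((cmod (cc t x))\<^sup>2) / wt t" by (simp only: mult_cnj_self)
    also have "\<dots> = complex_of_real ((cmod (cc t x))\<^sup>2 / p (\<omega> t))" by (simp only: of_real_divide)
    finally show "cc t x / wt t * cnj (cc t x) = complex_of_real ((cmod (cc t x))\<^sup>2 / p (\<omega> t))" .
  qed
  also have "\<dots> = complex_of_real (\<Sum>t<m. (cmod (cc t x))\<^sup>2 / p (\<omega> t))" by (simp only: of_real_sum)
  finally show ?thesis .
qed

lemma terms_zero:
  assumes "(\<Sum>t<m. (cmod (c t))\<^sup>2 / p (\<omega> t)) \<le> 0"
    and cz: "\<And>t. t < m \<Longrightarrow> p (\<omega> t) = 0 \<Longrightarrow> c t = 0"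
  shows "\<forall>t<m. c t = 0"
proof -
  have nn: "\<And>t. 0 \<le> (cmod (c t))\<^sup>2 / p (\<omega> t)" using pn by simp
  then have "(\<Sum>t<m. (cmod (c t))\<^sup>2 / p (\<omega> t)) = 0" using assms(1) by (meson order_antisym sum_nonneg)
  then have z: "\<forall>t<m. (cmod (c t))\<^sup>2 / p (\<omega> t) = 0"
    using sum_nonneg_eq_0_iff[of "{..<m}" "\<lambda>t. (cmod (c t))\<^sup>2 / p (\<omega> t)"] nn by simp
  show ?thesis
  proof (intro allI impI)
    fix t assume t: "t < m"
    show "c t = 0"
    proof (cases "p (\<omega> t) = 0")
      case True then show ?thesis using cz t by blast
    next
      case False
      have "(cmod (c t))\<^sup>2 / p (\<omega> t) = 0" using z t by blast
      then show ?thesis using False by simp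
    qed
  qed
qed

lemma cc_zero_p: "t < m \<Longrightarrow> p (\<omega> t) = 0 \<Longrightarrow> cfun aa n (\<omega> t) z = 0"
  unfolding cfun_def using pz by simp

context
  assumes ND: "\<And>z. (\<forall>t<m. cfun aa n (\<omega> t) z = 0) \<Longrightarrow> (\<forall>k<n. z k = 0)"
begin

lemma SH_inv: "invertible_mat SH"
proof (rule invertible_from_kernel[OF SH_carrier])
  fix x assume x: "x \<in> carrier_vec n" and z: "SH *\<^sub>v x = 0\<^sub>v n"
  define R where "R = (\<Sum>t<m. (cmod (cc t x))\<^sup>2 / p (\<omega> t))"
  have q: "(\<Sum>k<n. cnj (x $ k) * (SH *\<^sub>v x) $ k) = (1 / of_nat m) * complex_of_real R"
    using quad[OF x] unfolding R_def .
  have "(\<Sum>k<n. cnj (x $ k) * (SH *\<^sub>v x) $ k) = 0" using z by simp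
  then have "(1 / of_nat m) * complex_of_real R = 0" using q by simp
  then have "R = 0" using m by simp
  then have "(\<Sum>t<m. (cmod (cc t x))\<^sup>2 / p (\<omega> t)) \<le> 0" by (simp add: R_def)
  then have "\<forall>t<m. cc t x = 0" by (rule terms_zero) (rule cc_zero_p)
  then have "\<forall>k<n. x $ k = 0" using ND[of "\<lambda>l. x $ l"] by blast
  then show "x = 0\<^sub>v n" using x by (intro eq_vecI) auto
qed

end

end

lemma term_split:
  assumes "0 \<le> (q::real)"
  shows "(cmod (e + c))\<^sup>2 / q = (cmod e)\<^sup>2 / q + (cmod c)\<^sup>2 / q + 2 * Re (e / complex_of_real q * cnj c)"
proof (cases "q = 0")
  case True then show ?thesis by simp
next
  case False
  have "e / complex_of_real q * cnj c = (e * cnj c) / complex_of_real q" by simp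
  then have "Re (e / complex_of_real q * cnj c) = Re (e * cnj c) / q" by (simp add: Re_divide_of_real)
  then show ?thesis by (simp add: cmod_add_sq add_divide_distrib)
qed

context dset
begin

lemma inner_Wiota: "l2_inner (W_iota w n x) (s j) = cfun aa n j (\<lambda>l. x $ l)"
  unfolding W_iota_Wz Wz_inner[OF rb frame_l2[OF fr]] cfun_def amat_def by (simp add: ac_simps)

lemma W_iota_smult:
  assumes u: "u \<in> carrier_vec n"
  shows "W_iota w n (c \<cdot>\<^sub>v u) = (\<lambda>j. c * W_iota w n u j)"
  using u unfolding W_iota_def by (auto simp: sum_distrib_left mult.assoc)

lemma GH_bound:
  assumes h: "h \<in> l2" "l2_norm h \<le> 1" and k: "k < n"
  shows "cmod (Gamma_hat s w n p m \<omega> h $ k) \<le>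
     (1 / real m) * (\<Sum>t<m. ((1 + (l2_norm (s (\<omega> t)))\<^sup>2) / 2 / p (\<omega> t)) * cmod (aa (\<omega> t) k))"
proof -
  have Ph: "P_perp w n h \<in> l2" by (rule P_l2[OF rb h(1)])
  have Pn: "(l2_norm (P_perp w n h))\<^sup>2 \<le> 1"
  proof -
    have "l2_norm (P_perp w n h) \<le> 1" using P_norm_le[OF rb h(1), where n=n] h(2) by linarith
    moreover have "0 \<le> l2_norm (P_perp w n h)" by (rule norm_nonneg[OF Ph])
    ultimately show ?thesis by (simp add: power_le_one)
  qed
  have bt: "cmod (l2_inner (P_perp w n h) (s (\<omega> t))) \<le> (1 + (l2_norm (s (\<omega> t)))\<^sup>2) / 2" for t
    using inner_bound[OF Ph frame_l2[OF fr]] Pn by (smt (verit) divide_right_mono)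
  have "cmod (Gamma_hat s w n p m \<omega> h $ k) =
      cmod ((1 / of_nat m) * (\<Sum>t<m. l2_inner (P_perp w n h) (s (\<omega> t)) / wt t * cnj (aa (\<omega> t) k)))"
    by (simp add: GH_idx k)
  also have "\<dots> = (1 / real m) * cmod (\<Sum>t<m. l2_inner (P_perp w n h) (s (\<omega> t)) / wt t * cnj (aa (\<omega> t) k))"
    by (simp add: norm_mult norm_divide)
  also have "\<dots> \<le> (1 / real m) * (\<Sum>t<m. cmod (l2_inner (P_perp w n h) (s (\<omega> t)) / wt t * cnj (aa (\<omega> t) k)))"
    by (intro mult_left_mono norm_sum) simp
  also have "\<dots> \<le> (1 / real m) * (\<Sum>t<m. ((1 + (l2_norm (s (\<omega> t)))\<^sup>2) / 2 / p (\<omega> t)) * cmod (aa (\<omega> t) k))"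
  proof (intro mult_left_mono sum_mono)
    fix t
    have "cmod (l2_inner (P_perp w n h) (s (\<omega> t)) / wt t * cnj (aa (\<omega> t) k))
        = cmod (l2_inner (P_perp w n h) (s (\<omega> t))) / p (\<omega> t) * cmod (aa (\<omega> t) k)"
      using pn[of "\<omega> t"] by (simp add: norm_mult norm_divide)
    also have "\<dots> \<le> ((1 + (l2_norm (s (\<omega> t)))\<^sup>2) / 2 / p (\<omega> t)) * cmod (aa (\<omega> t) k)"
      by (intro mult_right_mono divide_right_mono bt pn) simp
    finally show "cmod (l2_inner (P_perp w n h) (s (\<omega> t)) / wt t * cnj (aa (\<omega> t) k))
        \<le> ((1 + (l2_norm (s (\<omega> t)))\<^sup>2) / 2 / p (\<omega> t)) * cmod (aa (\<omega> t) k)" .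
  qed simp
  finally show ?thesis .
qed

lemma T_bdd:
  assumes M: "M \<in> carrier_mat n n"
  shows "bdd_above {l2_norm (W_iota w n (M *\<^sub>v Gamma_hat s w n p m \<omega> h)) | h. h \<in> l2 \<and> l2_norm h \<le> 1}"
proof -
  define \<gamma> where "\<gamma> l = (1 / real m) * (\<Sum>t<m. ((1 + (l2_norm (s (\<omega> t)))\<^sup>2) / 2 / p (\<omega> t)) * cmod (aa (\<omega> t) l))" for l
  define \<mu> where "\<mu> k = (\<Sum>l<n. cmod (M $$ (k,l)) * \<gamma> l)" for k
  define R where "R = sqrt (D * (\<Sum>k<n. (\<mu> k)\<^sup>2))"
  have D0: "0 \<le> D" using rb by (simp add: is_riesz_basis_def)
  have "l2_norm (W_iota w n (M *\<^sub>v Gamma_hat s w n p m \<omega> h)) \<le> R" if h: "h \<in> l2" "l2_norm h \<le> 1" for h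
  proof -
    let ?g = "Gamma_hat s w n p m \<omega> h"
    let ?u = "M *\<^sub>v ?g"
    have g: "?g \<in> carrier_vec n" by (rule GH_dim)
    have uk: "cmod (?u $ k) \<le> \<mu> k" if k: "k < n" for k
    proof -
      have "cmod (?u $ k) = cmod (\<Sum>l<n. M $$ (k,l) * ?g $ l)" by (simp add: matvec_idx[OF M g k])
      also have "\<dots> \<le> (\<Sum>l<n. cmod (M $$ (k,l) * ?g $ l))" by (rule norm_sum)
      also have "\<dots> \<le> \<mu> k" unfolding \<mu>_def
      proof (rule sum_mono)
        fix l assume "l \<in> {..<n}"
        then have "cmod (?g $ l) \<le> \<gamma> l" unfolding \<gamma>_def by (intro GH_bound[OF h]) simp
        then show "cmod (M $$ (k,l) * ?g $ l) \<le> cmod (M $$ (k,l)) * \<gamma> l"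
          by (simp add: norm_mult mult_left_mono)
      qed
      finally show ?thesis .
    qed
    have "nsq n (\<lambda>k. ?u $ k) \<le> (\<Sum>k<n. (\<mu> k)\<^sup>2)"
      unfolding nsq_def by (intro sum_mono power_mono uk) auto
    moreover have "(l2_norm (W_iota w n ?u))\<^sup>2 \<le> D * nsq n (\<lambda>k. ?u $ k)"
      using riesz_fin[OF rb, of n "\<lambda>k. ?u $ k"] by (simp add: W_iota_Wz)
    ultimately have "(l2_norm (W_iota w n ?u))\<^sup>2 \<le> D * (\<Sum>k<n. (\<mu> k)\<^sup>2)"
      using D0 by (meson mult_left_mono order_trans)
    then show ?thesis unfolding R_def by (rule real_le_rsqrt)
  qed
  then show ?thesis by (intro bdd_aboveI[of _ R]) blast
qed

abbreviation "Tm h \<equiv> W_iota w n (mat_inv SH *\<^sub>v Gamma_hat s w n p m \<omega> h)"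

lemma K_eq: "K_const s w n p m \<omega> = Sup {l2_norm (Tm h) | h. h \<in> l2 \<and> l2_norm h \<le> 1}"
  by (simp add: K_const_def l2_opnorm_def)

lemma K_bound:
  assumes Mi: "mat_inv SH \<in> carrier_mat n n" and f: "f \<in> l2"
  shows "l2_norm (Tm f) \<le> K_const s w n p m \<omega> * l2_norm (P_perp w n f)"
proof -
  let ?Pf = "P_perp w n f"
  let ?Mi = "mat_inv SH"
  have Pf: "?Pf \<in> orth_compl (W_sub w n)" using P_perp_props[OF rb f] by blast
  have Pfl2: "?Pf \<in> l2" using Pf by (simp add: orth_compl_def)
  show ?thesis
  proof (cases "l2_norm ?Pf = 0")
    case True
    then have P0: "?Pf = (\<lambda>j. 0)" using norm_zero_imp[OF Pfl2] by auto
    have g0: "Gamma_hat s w n p m \<omega> f = 0\<^sub>v n"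
      by (rule eq_vecI) (auto simp: GH_idx P0 GH_dim[THEN carrier_vecD])
    have "(?Mi *\<^sub>v Gamma_hat s w n p m \<omega> f) $ k = 0" if "k < n" for k
      using matvec_idx[OF Mi _ that, of "Gamma_hat s w n p m \<omega> f"] g0 by simp
    then have "Tm f = (\<lambda>j. 0)" unfolding W_iota_def by (auto intro!: sum.neutral)
    then show ?thesis using True by simp
  next
    case False
    define N where "N = l2_norm ?Pf"
    have N: "0 < N" using False norm_nonneg[OF Pfl2] by (simp add: N_def)
    define c where "c = complex_of_real (1 / N)"
    define h0 where "h0 = (\<lambda>j. c * ?Pf j)"
    have h0V: "h0 \<in> orth_compl (W_sub w n)" unfolding h0_def by (rule orth_compl_scale[OF rb Pf])
    have h0l2: "h0 \<in> l2" using h0V by (simp add: orth_compl_def)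
    have Ph0: "P_perp w n h0 = h0" by (rule P_fix[OF rb h0V])
    have cN: "cmod c = 1 / N" using N unfolding c_def by (simp only: norm_of_real) simp
    have "l2_norm h0 = cmod c * l2_norm ?Pf" unfolding h0_def by (rule norm_scale[OF Pfl2])
    also note cN
    finally have nh0: "l2_norm h0 = 1" using N by (simp add: N_def)
    have g: "Gamma_hat s w n p m \<omega> h0 = c \<cdot>\<^sub>v Gamma_hat s w n p m \<omega> f"
    proof (rule eq_vecI)
      fix k assume "k < dim_vec (c \<cdot>\<^sub>v Gamma_hat s w n p m \<omega> f)"
      then have k: "k < n" using GH_dim[of f] by simp
      have i: "l2_inner h0 (s (\<omega> t)) = c * l2_inner ?Pf (s (\<omega> t))" for t
        unfolding h0_def by (rule inner_scale_left[OF Pfl2 frame_l2[OF fr]])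
      show "Gamma_hat s w n p m \<omega> h0 $ k = (c \<cdot>\<^sub>v Gamma_hat s w n p m \<omega> f) $ k"
        using k GH_dim[of f] by (simp add: GH_idx Ph0 i sum_distrib_left ac_simps)
    next
      have "dim_vec (Gamma_hat s w n p m \<omega> h0) = n" by (rule carrier_vecD[OF GH_dim])
      moreover have "dim_vec (Gamma_hat s w n p m \<omega> f) = n" by (rule carrier_vecD[OF GH_dim])
      ultimately show "dim_vec (Gamma_hat s w n p m \<omega> h0) = dim_vec (c \<cdot>\<^sub>v Gamma_hat s w n p m \<omega> f)" by simp
    qed
    have "Tm h0 = W_iota w n (c \<cdot>\<^sub>v (?Mi *\<^sub>v Gamma_hat s w n p m \<omega> f))"
      unfolding g by (simp add: mult_mat_vec[OF Mi GH_dim])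
    also have "\<dots> = (\<lambda>j. c * Tm f j)" by (rule W_iota_smult) (use Mi GH_dim in auto)
    finally have T0: "Tm h0 = (\<lambda>j. c * Tm f j)" .
    have Tfl2: "Tm f \<in> l2" unfolding W_iota_Wz by (rule Wz_l2[OF rb])
    have "l2_norm (Tm h0) = l2_norm (Tm f) / N"
      unfolding T0 norm_scale[OF Tfl2] cN by simp
    moreover have "l2_norm (Tm h0) \<le> K_const s w n p m \<omega>"
      unfolding K_eq by (rule cSup_upper) (use h0l2 nh0 T_bdd[OF Mi] in auto)
    ultimately have "l2_norm (Tm f) / N \<le> K_const s w n p m \<omega>" by simp
    then show ?thesis using N by (simp add: N_def pos_divide_le_eq)
  qed
qed

end

context dset
begin

lemma LS_obj_eq: "LS_obj s w n p m \<omega> f x = (\<Sum>t<m. (cmod (cc t x - l2_inner f (s (\<omega> t))))\<^sup>2 / p (\<omega> t))"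
  unfolding LS_obj_def inner_Wiota ..

lemma cc_diff: "x \<in> carrier_vec n \<Longrightarrow> y \<in> carrier_vec n \<Longrightarrow> cc t (x - y) = cc t x - cc t y"
proof -
  assume x: "x \<in> carrier_vec n" and y: "y \<in> carrier_vec n"
  have "cc t (x - y) = cfun aa n (\<omega> t) (\<lambda>l. x $ l - y $ l)" by (rule cfun_cong) (use x y in auto)
  then show ?thesis by (simp add: cfun_diff)
qed

context
  assumes ND: "\<And>z. (\<forall>t<m. cfun aa n (\<omega> t) z = 0) \<Longrightarrow> (\<forall>k<n. z k = 0)"
begin

lemma det_main:
  assumes f: "f \<in> l2"
  shows "(\<exists>!x. is_LS_minimizer s w n p m \<omega> f x) \<and>
         (\<forall>x. is_LS_minimizer s w n p m \<omega> f x \<longrightarrow>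
            l2_norm (\<lambda>j. f j - W_iota w n x j) \<le> l2_norm (P_perp w n f) * sqrt (1 + (K_const s w n p m \<omega>)\<^sup>2))"
proof -
  let ?Mi = "mat_inv SH"
  let ?g = "Gamma_hat s w n p m \<omega> f"
  let ?Pf = "P_perp w n f"
  have Mi: "?Mi \<in> carrier_mat n n" and SMi: "SH * ?Mi = 1\<^sub>m n"
    using mat_inv_props[OF SH_carrier SH_inv[OF ND]] by auto
  have g: "?g \<in> carrier_vec n" by (rule GH_dim)
  define d where "d = ?Mi *\<^sub>v ?g"
  have d: "d \<in> carrier_vec n" using Mi g by (simp add: d_def)
  have SHd: "SH *\<^sub>v d = ?g"
    unfolding d_def using assoc_mult_mat_vec[OF SH_carrier Mi g, symmetric] SMi g by simp
  obtain y0 where y0: "\<forall>j. f j - ?Pf j = Wz w n y0 j" and PfV: "?Pf \<in> orth_compl (W_sub w n)"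
    using P_perp_props[OF rb f] by blast
  have Pfl2: "?Pf \<in> l2" using PfV by (simp add: orth_compl_def)
  define xs where "xs = vec n y0 + d"
  have xs: "xs \<in> carrier_vec n" using d by (simp add: xs_def)
  define \<beta> where "\<beta> t = l2_inner ?Pf (s (\<omega> t))" for t
  have fdec: "f = (\<lambda>j. ?Pf j + Wz w n y0 j)"
  proof
    fix j
    have "f j - ?Pf j = Wz w n y0 j" using y0 by blast
    then show "f j = ?Pf j + Wz w n y0 j" by (simp add: diff_eq_eq add.commute)
  qed
  have hb: "l2_inner f (s (\<omega> t)) = \<beta> t + cfun aa n (\<omega> t) y0" for t
  proof -
    have "l2_inner f (s (\<omega> t)) = l2_inner (\<lambda>j. ?Pf j + Wz w n y0 j) (s (\<omega> t))"
      by (rule arg_cong[where f = "\<lambda>u. l2_inner u (s (\<omega> t))", OF fdec])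
    also have "\<dots> = \<beta> t + l2_inner (Wz w n y0) (s (\<omega> t))"
      unfolding \<beta>_def by (rule inner_add_left[OF Pfl2 Wz_l2[OF rb] frame_l2[OF fr]])
    also have "l2_inner (Wz w n y0) (s (\<omega> t)) = cfun aa n (\<omega> t) y0"
      unfolding Wz_inner[OF rb frame_l2[OF fr]] cfun_def amat_def by (simp add: ac_simps)
    finally show ?thesis .
  qed
  have hcc: "cc t xs = cfun aa n (\<omega> t) y0 + cc t d" for t
  proof -
    have "cc t xs = cfun aa n (\<omega> t) (\<lambda>l. y0 l + d $ l)"
      by (rule cfun_cong) (use d in \<open>simp add: xs_def\<close>)
    then show ?thesis by (simp add: cfun_add)
  qed
  define e where "e t = cc t d - \<beta> t" for t
  have he: "cc t xs - l2_inner f (s (\<omega> t)) = e t" for t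
    by (simp add: hcc hb e_def)
  have normal: "(\<Sum>t<m. e t / wt t * cnj (aa (\<omega> t) k)) = 0" if k: "k < n" for k
  proof -
    have "(SH *\<^sub>v d) $ k = ?g $ k" using SHd by simp
    then have "(1 / of_nat m) * (\<Sum>t<m. cc t d / wt t * cnj (aa (\<omega> t) k)) =
               (1 / of_nat m) * (\<Sum>t<m. \<beta> t / wt t * cnj (aa (\<omega> t) k))"
      by (simp add: SHx_idx[OF d k] GH_idx[OF k] \<beta>_def)
    then have "(\<Sum>t<m. cc t d / wt t * cnj (aa (\<omega> t) k)) = (\<Sum>t<m. \<beta> t / wt t * cnj (aa (\<omega> t) k))"
      using m by simp
    then have "(\<Sum>t<m. cc t d / wt t * cnj (aa (\<omega> t) k)) - (\<Sum>t<m. \<beta> t / wt t * cnj (aa (\<omega> t) k)) = 0"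
      by simp
    then show ?thesis
      by (simp add: e_def sum_subtractf[symmetric] diff_divide_distrib left_diff_distrib)
  qed
  have orth: "(\<Sum>t<m. e t / wt t * cnj (cc t z)) = 0" if z: "z \<in> carrier_vec n" for z
  proof -
    have "(\<Sum>t<m. e t / wt t * cnj (cc t z)) = (\<Sum>t<m. \<Sum>k<n. cnj (z $ k) * (e t / wt t * cnj (aa (\<omega> t) k)))"
      unfolding cfun_def by (simp add: sum_distrib_left ac_simps)
    also have "\<dots> = (\<Sum>k<n. \<Sum>t<m. cnj (z $ k) * (e t / wt t * cnj (aa (\<omega> t) k)))" by (rule sum.swap)
    also have "\<dots> = (\<Sum>k<n. cnj (z $ k) * (\<Sum>t<m. e t / wt t * cnj (aa (\<omega> t) k)))"
      by (simp add: sum_distrib_left)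
    also have "\<dots> = 0" using normal by simp
    finally show ?thesis .
  qed
  have expand: "LS_obj s w n p m \<omega> f x = LS_obj s w n p m \<omega> f xs + (\<Sum>t<m. (cmod (cc t (x - xs)))\<^sup>2 / p (\<omega> t))"
    if x: "x \<in> carrier_vec n" for x
  proof -
    have z: "x - xs \<in> carrier_vec n" using x xs by simp
    have split: "cc t x - l2_inner f (s (\<omega> t)) = e t + cc t (x - xs)" for t
      using he[of t] cc_diff[OF x xs, of t] by (simp add: algebra_simps)
    have "LS_obj s w n p m \<omega> f x = (\<Sum>t<m. (cmod (e t + cc t (x - xs)))\<^sup>2 / p (\<omega> t))"
      unfolding LS_obj_eq split ..
    also have "\<dots> = (\<Sum>t<m. (cmod (e t))\<^sup>2 / p (\<omega> t) + (cmod (cc t (x - xs)))\<^sup>2 / p (\<omega> t)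
                         + 2 * Re (e t / wt t * cnj (cc t (x - xs))))"
      by (rule sum.cong[OF refl]) (rule term_split[OF pn])
    also have "\<dots> = (\<Sum>t<m. (cmod (e t))\<^sup>2 / p (\<omega> t)) + (\<Sum>t<m. (cmod (cc t (x - xs)))\<^sup>2 / p (\<omega> t))
                    + 2 * Re (\<Sum>t<m. e t / wt t * cnj (cc t (x - xs)))"
      by (simp add: sum.distrib sum_distrib_left Re_sum)
    also have "Re (\<Sum>t<m. e t / wt t * cnj (cc t (x - xs))) = 0" using orth[OF z] by simp
    also have "(\<Sum>t<m. (cmod (e t))\<^sup>2 / p (\<omega> t)) = LS_obj s w n p m \<omega> f xs"
      unfolding LS_obj_eq he ..
    finally show ?thesis by simp
  qed
  have nn: "0 \<le> (\<Sum>t<m. (cmod (cc t z))\<^sup>2 / p (\<omega> t))" for z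
    using pn by (intro sum_nonneg) simp
  have xs_min: "is_LS_minimizer s w n p m \<omega> f xs"
    unfolding is_LS_minimizer_def
  proof (intro conjI ballI)
    show "xs \<in> carrier_vec n" by (rule xs)
    fix y :: "complex vec" assume y: "y \<in> carrier_vec n"
    show "LS_obj s w n p m \<omega> f xs \<le> LS_obj s w n p m \<omega> f y"
      using expand[OF y] nn[of "y - xs"] by linarith
  qed
  have uniq: "x = xs" if x: "is_LS_minimizer s w n p m \<omega> f x" for x
  proof -
    have xc: "x \<in> carrier_vec n" and le: "LS_obj s w n p m \<omega> f x \<le> LS_obj s w n p m \<omega> f xs"
      using x xs unfolding is_LS_minimizer_def by auto
    have "(\<Sum>t<m. (cmod (cc t (x - xs)))\<^sup>2 / p (\<omega> t)) \<le> 0" using le expand[OF xc] by simp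
    then have "\<forall>t<m. cc t (x - xs) = 0" by (rule terms_zero) (rule cc_zero_p)
    then have "\<forall>k<n. (x - xs) $ k = 0" using ND[of "\<lambda>l. (x - xs) $ l"] by blast
    then show ?thesis using xc xs by (intro eq_vecI) auto
  qed
  have "l2_norm (\<lambda>j. f j - W_iota w n xs j) \<le> l2_norm ?Pf * sqrt (1 + (K_const s w n p m \<omega>)\<^sup>2)"
  proof -
    let ?K = "K_const s w n p m \<omega>"
    let ?u = "Wz w n (\<lambda>k. - d $ k)"
    have Wxs: "W_iota w n xs j = Wz w n y0 j + Tm f j" for j
    proof -
      have "W_iota w n xs j = (\<Sum>k<n. y0 k * w k j + d $ k * w k j)"
        unfolding W_iota_def by (rule sum.cong[OF refl]) (use d in \<open>simp add: xs_def distrib_right\<close>)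
      also have "\<dots> = Wz w n y0 j + W_iota w n d j"
        unfolding Wz_def W_iota_def by (simp add: sum.distrib)
      finally show ?thesis by (simp add: d_def)
    qed
    have eq: "(\<lambda>j. f j - W_iota w n xs j) = (\<lambda>j. ?Pf j + ?u j)"
    proof
      fix j
      have "f j - W_iota w n xs j = (f j - Wz w n y0 j) - Tm f j" by (simp add: Wxs)
      also have "f j - Wz w n y0 j = ?Pf j" using fdec by (metis add_diff_cancel_right')
      also have "Tm f j = - ?u j" unfolding d_def W_iota_Wz Wz_def by (simp add: sum_negf)
      finally show "f j - W_iota w n xs j = ?Pf j + ?u j" by simp
    qed
    have un: "l2_norm ?u = l2_norm (Tm f)"
    proof -
      have "?u = (\<lambda>j. - Tm f j)" unfolding d_def W_iota_Wz Wz_def by (simp add: sum_negf)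
      then show ?thesis by (simp add: norm_uminus)
    qed
    have sq: "(l2_norm (\<lambda>j. f j - W_iota w n xs j))\<^sup>2 = (l2_norm ?Pf)\<^sup>2 + (l2_norm (Tm f))\<^sup>2"
      unfolding eq un[symmetric] by (rule pythag[OF Pfl2 Wz_l2[OF rb] orth_Wz(2)[OF rb PfV]])
    have Tl2: "Tm f \<in> l2" unfolding W_iota_Wz by (rule Wz_l2[OF rb])
    have Kb: "l2_norm (Tm f) \<le> ?K * l2_norm ?Pf" by (rule K_bound[OF Mi f])
    have T0: "0 \<le> l2_norm (Tm f)" by (rule norm_nonneg[OF Tl2])
    have N0: "0 \<le> l2_norm ?Pf" by (rule norm_nonneg[OF Pfl2])
    have "(l2_norm (Tm f))\<^sup>2 \<le> (?K * l2_norm ?Pf)\<^sup>2" using Kb T0 by (rule power_mono)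
    then have "(l2_norm (\<lambda>j. f j - W_iota w n xs j))\<^sup>2 \<le> (l2_norm ?Pf)\<^sup>2 * (1 + ?K\<^sup>2)"
      unfolding sq by (simp add: power_mult_distrib algebra_simps)
    then have "l2_norm (\<lambda>j. f j - W_iota w n xs j) \<le> sqrt ((l2_norm ?Pf)\<^sup>2 * (1 + ?K\<^sup>2))"
      by (rule real_le_rsqrt)
    also have "\<dots> = l2_norm ?Pf * sqrt (1 + ?K\<^sup>2)" using N0 by (simp add: real_sqrt_mult)
    finally show ?thesis .
  qed
  then show ?thesis using xs_min uniq by blast
qed

end

end

theorem corollary3p8:
  fixes A B C D :: real
  assumes "0 < A" "A \<le> B" "0 < C" "C \<le> D"
  shows "\<exists>c > 0. \<forall>s w. is_frame s A B \<longrightarrow> is_riesz_basis w C D \<longrightarrow>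
           closed_span w \<subseteq> closed_span s \<longrightarrow>
           (\<forall>n \<ge> 1. R_prime s w n (leverage s w n) < \<infinity> \<longrightarrow>
             (\<forall>f \<in> l2. \<forall>\<delta>::real. 0 < \<delta> \<longrightarrow> \<delta> < 1 \<longrightarrow> (\<forall>m::nat.
                real m \<ge> c * real n * ln (2 * real n / \<delta>) \<longrightarrow>
                measure_pmf.prob (sample_pmf (leverage s w n) m)
                  {\<omega>. invertible_mat (Sigma_hat s w n (leverage s w n) m \<omega>) \<and>
                       (\<exists>!x. is_LS_minimizer s w n (leverage s w n) m \<omega> f x) \<and>
                       (\<forall>x. is_LS_minimizer s w n (leverage s w n) m \<omega> f x \<longrightarrow>
                          l2_norm (\<lambda>j. f j - W_iota w n x j)
                            \<le> l2_norm (P_perp w n f) *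
                               sqrt (1 + (K_const s w n (leverage s w n) m \<omega>)\<^sup>2))}
                \<ge> 1 - \<delta>)))"
proof (intro exI[of _ "B * D / (A * C)"] conjI allI impI ballI)
  have AC: "0 < A * C" using assms by simp
  have BD: "0 < B * D" using assms by (simp add: mult_pos_pos)
  show "0 < B * D / (A * C)" using AC BD by simp
  fix s w n f \<delta> m
  assume fr: "is_frame s A B" and rb: "is_riesz_basis w C D" and inc: "closed_span w \<subseteq> closed_span s"
    and n: "1 \<le> n" and R: "R_prime s w n (leverage s w n) < \<infinity>" and f: "f \<in> l2" and d0: "0 < \<delta>" and d1: "\<delta> < 1"
    and mb: "B * D / (A * C) * real n * ln (2 * real n / \<delta>) \<le> real m"
  let ?p = "leverage s w n"
  let ?T = "Re (mat_trace (Sigma_mat s w n))"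
  let ?x = "A * C / ?T"
  have Tb: "real n * (A * C) \<le> ?T \<and> ?T \<le> real n * (B * D)" by (rule trace_bounds[OF fr rb inc])
  have ACT: "A * C \<le> ?T" by (rule trace_pos[OF fr rb inc n])
  have T: "0 < ?T" using ACT AC by linarith
  have x0: "0 < ?x" using AC T by simp
  have x1: "?x \<le> 1" using ACT T by simp
  have L0: "0 < ln (2 * real n / \<delta>)"
  proof -
    have "1 < 2 * real n / \<delta>" using n d0 d1 by (simp add: less_divide_eq)
    then show ?thesis by simp
  qed
  have mpos: "0 < m"
  proof -
    have "0 < B * D / (A * C) * real n * ln (2 * real n / \<delta>)" using AC BD n L0 by simp
    then show ?thesis using mb by simp
  qed
  have xm: "ln (2 * real n / \<delta>) \<le> ?x * real m"
  proof -
    have "A * C / (real n * (B * D)) \<le> ?x"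
      using Tb T AC by (intro divide_left_mono) (auto intro!: mult_pos_pos)
    then have "A * C / (real n * (B * D)) * real m \<le> ?x * real m" by (intro mult_right_mono) auto
    moreover have "ln (2 * real n / \<delta>) \<le> A * C / (real n * (B * D)) * real m"
    proof -
      have "A * C / (real n * (B * D)) * (B * D / (A * C) * real n * ln (2 * real n / \<delta>)) = ln (2 * real n / \<delta>)"
      proof -
        have nz: "A \<noteq> 0" "C \<noteq> 0" "B \<noteq> 0" "D \<noteq> 0" "real n \<noteq> 0" using assms n by auto
        then show ?thesis by (simp add: field_simps)
      qed
      moreover have "A * C / (real n * (B * D)) * (B * D / (A * C) * real n * ln (2 * real n / \<delta>))
          \<le> A * C / (real n * (B * D)) * real m"
        using mb AC BD n by (intro mult_left_mono) auto
      ultimately show ?thesis by simp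
    qed
    ultimately show ?thesis by linarith
  qed
  have bound: "real n * (1 - ?x) ^ m \<le> \<delta>" by (rule exp_bound[OF x0 x1 xm n d0])
  have pr: "1 - real n * (1 - ?x) ^ m \<le>
     measure_pmf.prob (sample_pmf ?p m) {\<omega>. defic (amat s w) n (\<omega> ` {..<m}) = 0}"
    by (rule prob_concrete[OF fr rb inc n])
  have dset: "dset s w A B C D ?p m n" for \<omega>
    by (unfold_locales) (use fr rb inc mpos lev_nonneg[OF fr rb inc n] lev_zero[OF fr rb inc n] in auto)
  have sub: "{\<omega>. defic (amat s w) n (\<omega> ` {..<m}) = 0} \<subseteq>
     {\<omega>. invertible_mat (Sigma_hat s w n ?p m \<omega>) \<and>
          (\<exists>!x. is_LS_minimizer s w n ?p m \<omega> f x) \<and>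
          (\<forall>x. is_LS_minimizer s w n ?p m \<omega> f x \<longrightarrow>
             l2_norm (\<lambda>j. f j - W_iota w n x j) \<le> l2_norm (P_perp w n f) * sqrt (1 + (K_const s w n ?p m \<omega>)\<^sup>2))}"
  proof
    fix \<omega> assume "\<omega> \<in> {\<omega>. defic (amat s w) n (\<omega> ` {..<m}) = 0}"
    then have D0: "defic (amat s w) n (\<omega> ` {..<m}) = 0" by simp
    have ND: "\<forall>k<n. z k = 0" if "\<forall>t<m. cfun (amat s w) n (\<omega> t) z = 0" for z
      using defic_zero[OF D0] that by blast
    show "\<omega> \<in> {\<omega>. invertible_mat (Sigma_hat s w n ?p m \<omega>) \<and>
          (\<exists>!x. is_LS_minimizer s w n ?p m \<omega> f x) \<and>
          (\<forall>x. is_LS_minimizer s w n ?p m \<omega> f x \<longrightarrow>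
             l2_norm (\<lambda>j. f j - W_iota w n x j) \<le> l2_norm (P_perp w n f) * sqrt (1 + (K_const s w n ?p m \<omega>)\<^sup>2))}"
      using dset.SH_inv[OF dset ND] dset.det_main[OF dset ND f] by simp
  qed
  have "measure_pmf.prob (sample_pmf ?p m) {\<omega>. defic (amat s w) n (\<omega> ` {..<m}) = 0} \<le>
     measure_pmf.prob (sample_pmf ?p m)
     {\<omega>. invertible_mat (Sigma_hat s w n ?p m \<omega>) \<and>
          (\<exists>!x. is_LS_minimizer s w n ?p m \<omega> f x) \<and>
          (\<forall>x. is_LS_minimizer s w n ?p m \<omega> f x \<longrightarrow>
             l2_norm (\<lambda>j. f j - W_iota w n x j) \<le> l2_norm (P_perp w n f) * sqrt (1 + (K_const s w n ?p m \<omega>)\<^sup>2))}"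
    by (rule measure_pmf.finite_measure_mono[OF sub]) simp
  then show "1 - \<delta> \<le> measure_pmf.prob (sample_pmf ?p m)
     {\<omega>. invertible_mat (Sigma_hat s w n ?p m \<omega>) \<and>
          (\<exists>!x. is_LS_minimizer s w n ?p m \<omega> f x) \<and>
          (\<forall>x. is_LS_minimizer s w n ?p m \<omega> f x \<longrightarrow>
             l2_norm (\<lambda>j. f j - W_iota w n x j) \<le> l2_norm (P_perp w n f) * sqrt (1 + (K_const s w n ?p m \<omega>)\<^sup>2))}"
    using pr bound by linarith
qed

end
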